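(* Let $A\in\mathbb{R}^{n\times n}$ with $\rho(A)<1$, $C\in\mathbb{R}^{m\times n}$, $Q\in\mathbb{S}^n_{++}$ (so that $Q^{-1}$ exists), $R\in\mathbb S^m_{++}$, $\lambda\in(0,1]$, $\Sigma$ the solution of $\Sigma=A\Sigma A^{\top}+Q$, $\Pi=C\Sigma C^{\top}+R$, and $M\in\mathbb S^n_{++}$. For $Y\ge0$ let $\bar X_{ol}(Y)$ denote the unique positive definite solution of $X=g_{\lambda,R+Y^{-1}}(X)$. Then the problem $$\min_{Y}\ \mathrm{tr}(\Pi Y)\quad\text{s.t. } Y\ge0,\ \bar X_{ol}(Y)\le M$$ is equivalent to the semidefinite program $$\min_{S,Y}\ \mathrm{tr}(\Pi Y)\quad\text{s.t. }\Psi(S,Y)\ge0,\ \begin{bmatrix}S&I\\ I&M\end{bmatrix}\ge0,\ Y\ge0,$$ where $$\Psi(S,Y)=\begin{bmatrix} S&\sqrt\lambda SA&\sqrt{1-\lambda}SA&S&0\\ \sqrt\lambda A^{\top}S&S+C^{\top}R^{-1}C&0&0&C^{\top}R^{-1}\\ \sqrt{1-\lambda}A^{\top}S&0&S&0&0\\ S&0&0&Q^{-1}&0\\ 0&R^{-1}C&0&0&Y+R^{-1}\end{bmatrix}.$$ (Equivalent means: $Y$ is feasible for the first problem if and only if there is $S$ such that $(S,Y)$ is feasible for the second, and the objectives coincide.)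
   Context: For $X\ge0$, $W>0$, $\theta\in(0,1]$, $g_{\theta,W}(X)=AXA^{\top}+Q-\theta AXC^{\top}(CXC^{\top}+W)^{-1}CXA^{\top}$. Matrix inequalities are in the positive semidefinite order; $\mathbb S^n_{++}$ denotes symmetric positive definite $n\times n$ matrices. Standing assumptions: $(A,\sqrt Q)$ stabilizable, $(A,C)$ detectable. *)

theory Defs
  imports "HOL-Analysis.Analysis"
begin

definition psd :: "real^'n^'n \<Rightarrow> bool" where
  "psd M \<longleftrightarrow> transpose M = M \<and> (\<forall>x. 0 \<le> x \<bullet> (M *v x))"

definition pd :: "real^'n^'n \<Rightarrow> bool" where
  "pd M \<longleftrightarrow> transpose M = M \<and> (\<forall>x. x \<noteq> 0 \<longrightarrow> 0 < x \<bullet> (M *v x))"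

definition loewner_le :: "real^'n^'n \<Rightarrow> real^'n^'n \<Rightarrow> bool" where
  "loewner_le X M \<longleftrightarrow> psd (M - X)"

definition spectral_radius :: "real^'n^'n \<Rightarrow> real" where
  "spectral_radius A = Max {cmod z | z. \<exists>v :: complex^'n. v \<noteq> 0 \<and>
      (map_matrix complex_of_real A) *v v = z *s v}"

definition g :: "real^'n^'n \<Rightarrow> real^'n^'m \<Rightarrow> real^'n^'n \<Rightarrow> real \<Rightarrow> real^'m^'m
    \<Rightarrow> real^'n^'n \<Rightarrow> real^'n^'n" where
  "g A C Q \<theta> W X = A ** X ** transpose A + Q
     - \<theta> *\<^sub>R (A ** X ** transpose C ** matrix_inv (C ** X ** transpose C + W) ** C ** X ** transpose A)"

(* g_{\<theta>,R+Y^{-1}}(X), with (C X C' + R + Y^{-1})^{-1} written as Y (I + (C X C' + R) Y)^{-1};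
   this coincides with the literal formula whenever Y is invertible and extends it to
   singular Y \<ge> 0 (Y^{-1} = "infinite noise" in the directions of ker Y). *)
definition g_ol :: "real^'n^'n \<Rightarrow> real^'n^'m \<Rightarrow> real^'n^'n \<Rightarrow> real \<Rightarrow> real^'m^'m
    \<Rightarrow> real^'m^'m \<Rightarrow> real^'n^'n \<Rightarrow> real^'n^'n" where
  "g_ol A C Q \<theta> R Y X = A ** X ** transpose A + Q
     - \<theta> *\<^sub>R (A ** X ** transpose C
           ** (Y ** matrix_inv (mat 1 + (C ** X ** transpose C + R) ** Y))
           ** C ** X ** transpose A)"

definition X_ol :: "real^'n^'n \<Rightarrow> real^'n^'m \<Rightarrow> real^'n^'n \<Rightarrow> real \<Rightarrow> real^'m^'m
    \<Rightarrow> real^'m^'m \<Rightarrow> real^'n^'n" where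
  "X_ol A C Q lam R Y = (THE X. pd X \<and> X = g_ol A C Q lam R Y X)"

definition hcat :: "real^'b^'a \<Rightarrow> real^'c^'a \<Rightarrow> real^('b + 'c)^'a" where
  "hcat P Q = (\<chi> i j. case j of Inl k \<Rightarrow> P $ i $ k | Inr k \<Rightarrow> Q $ i $ k)"

definition vcat :: "real^'c^'a \<Rightarrow> real^'c^'b \<Rightarrow> real^'c^('a + 'b)" where
  "vcat P Q = (\<chi> i. case i of Inl k \<Rightarrow> P $ k | Inr k \<Rightarrow> Q $ k)"

definition blk2 :: "real^'a^'a \<Rightarrow> real^'b^'a \<Rightarrow> real^'a^'b \<Rightarrow> real^'b^'b \<Rightarrow> real^('a+'b)^('a+'b)" where
  "blk2 P Q R S = vcat (hcat P Q) (hcat R S)"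

definition Psi :: "real^'n^'n \<Rightarrow> real^'n^'m \<Rightarrow> real^'n^'n \<Rightarrow> real^'m^'m \<Rightarrow> real
    \<Rightarrow> real^'n^'n \<Rightarrow> real^'m^'m \<Rightarrow> real^('n + ('n + ('n + ('n + 'm))))^('n + ('n + ('n + ('n + 'm))))" where
  "Psi A C Q R lam S Y =
    (let Ri = matrix_inv R; Qi = matrix_inv Q; a = sqrt lam; b = sqrt (1 - lam) in
     vcat (hcat S (hcat (a *\<^sub>R (S ** A)) (hcat (b *\<^sub>R (S ** A)) (hcat S 0))))
    (vcat (hcat (a *\<^sub>R (transpose A ** S)) (hcat (S + transpose C ** Ri ** C) (hcat 0 (hcat 0 (transpose C ** Ri)))))
    (vcat (hcat (b *\<^sub>R (transpose A ** S)) (hcat 0 (hcat S (hcat 0 0))))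
    (vcat (hcat S (hcat 0 (hcat 0 (hcat Qi 0))))
          (hcat 0 (hcat (Ri ** C) (hcat 0 (hcat 0 (Y + Ri)))))))))"

end

theory Submission
  imports Defs "Jordan_Normal_Form.Jordan_Normal_Form_Existence"
begin

no_notation Matrix.vec_index (infixl \<open>$\<close> 100)



fun mpow :: "real^'n^'n \<Rightarrow> nat \<Rightarrow> real^'n^'n" where
  "mpow A 0 = Finite_Cartesian_Product.mat 1"
| "mpow A (Suc k) = mpow A k ** A"

definition mc :: "(nat \<Rightarrow> 'n::finite) \<Rightarrow> real^'n^'n \<Rightarrow> complex Matrix.mat" where
  "mc h B = Matrix.mat CARD('n) CARD('n) (\<lambda>(i,j). complex_of_real (B $ h i $ h j))"

lemma mc_carrier: "mc h B \<in> carrier_mat CARD('n) CARD('n)"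
  for h :: "nat \<Rightarrow> 'n::finite" by (simp add: mc_def)

lemma mc_index: "i < CARD('n) \<Longrightarrow> j < CARD('n) \<Longrightarrow> mc h B $$ (i,j) = complex_of_real (B $ h i $ h (j::nat))"
  for h :: "nat \<Rightarrow> 'n::finite" by (simp add: mc_def)

lemma reindex:
  assumes h: "bij_betw h {0..<CARD('n)} (UNIV::'n::finite set)"
  shows "(\<Sum>a\<in>UNIV. f a) = (\<Sum>k\<in>{0..<CARD('n)}. f (h k))"
  using sum.reindex_bij_betw[OF h, of f] by simp

lemma mc_mult:
  fixes h :: "nat \<Rightarrow> 'n::finite"
  assumes h: "bij_betw h {0..<CARD('n)} UNIV"
  shows "mc h (B ** B2) = mc h B * mc h B2"
proof (rule eq_matI)
  show "dim_row (mc h (B ** B2)) = dim_row (mc h B * mc h B2)" "dim_col (mc h (B ** B2)) = dim_col (mc h B * mc h B2)"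
    by (simp_all add: mc_def)
  fix i j assume ij: "i < dim_row (mc h B * mc h B2)" "j < dim_col (mc h B * mc h B2)"
  hence i: "i < CARD('n)" and j: "j < CARD('n)" by (simp_all add: mc_def)
  have "(mc h B * mc h B2) $$ (i,j) = (\<Sum>k\<in>{0..<CARD('n)}. mc h B $$ (i,k) * mc h B2 $$ (k,j))"
    using i j by (simp add: mc_def scalar_prod_def)
  also have "\<dots> = (\<Sum>k\<in>{0..<CARD('n)}. complex_of_real (B $ h i $ h k * B2 $ h k $ h j))"
    using i j by (intro sum.cong) (simp_all add: mc_def)
  also have "\<dots> = complex_of_real (\<Sum>a\<in>UNIV. B $ h i $ a * B2 $ a $ h j)"
    unfolding reindex[OF h, of "\<lambda>a. B $ h i $ a * B2 $ a $ h j"] by simp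
  also have "\<dots> = mc h (B ** B2) $$ (i,j)"
    using i j by (simp add: mc_def matrix_matrix_mult_def)
  finally show "mc h (B ** B2) $$ (i,j) = (mc h B * mc h B2) $$ (i,j)" by simp
qed

lemma mc_one:
  fixes h :: "nat \<Rightarrow> 'n::finite"
  assumes h: "bij_betw h {0..<CARD('n)} UNIV"
  shows "mc h (Finite_Cartesian_Product.mat 1) = 1\<^sub>m CARD('n)"
proof (rule eq_matI)
  fix i j assume ij: "i < dim_row (1\<^sub>m CARD('n))" "j < dim_col (1\<^sub>m CARD('n) :: complex Matrix.mat)"
  hence i: "i < CARD('n)" and j: "j < CARD('n)" by simp_all
  have "h i = h j \<longleftrightarrow> i = j" using h i j unfolding bij_betw_def inj_on_def by auto
  thus "mc h (Finite_Cartesian_Product.mat 1) $$ (i,j) = 1\<^sub>m CARD('n) $$ (i,j)"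
    using i j by (simp add: mc_def Finite_Cartesian_Product.mat_def)
qed (simp_all add: mc_def)

lemma mc_pow:
  fixes h :: "nat \<Rightarrow> 'n::finite"
  assumes h: "bij_betw h {0..<CARD('n)} UNIV"
  shows "mc h (mpow B k) = (mc h B) ^\<^sub>m k"
proof (induction k)
  case 0 thus ?case using mc_one[OF h] by (simp add: mc_def)
next
  case (Suc k) thus ?case using mc_mult[OF h] by simp
qed


lemma jnf_to_ours:
  fixes h :: "nat \<Rightarrow> 'n::finite" and B :: "real^'n^'n"
  assumes h: "bij_betw h {0..<CARD('n)} UNIV" and ev: "eigenvalue (mc h B) e"
  shows "\<exists>w::complex^'n. w \<noteq> 0 \<and> map_matrix complex_of_real B *v w = e *s w"
proof -
  let ?n = "CARD('n)"
  let ?g = "inv_into {0..<?n} h"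
  have g1: "?g a < ?n" "h (?g a) = a" for a
    using h bij_betw_inv_into_left bij_betw_inv_into_right inv_into_into
    unfolding bij_betw_def by (metis UNIV_I atLeastLessThan_iff)+
  have g2: "k < ?n \<Longrightarrow> ?g (h k) = k" for k
    using h bij_betw_inv_into_left by fastforce
  from ev obtain v where v: "eigenvector (mc h B) v e" unfolding eigenvalue_def by blast
  hence vc: "v \<in> carrier_vec ?n" and v0: "v \<noteq> 0\<^sub>v ?n" and vev: "mc h B *\<^sub>v v = e \<cdot>\<^sub>v v"
    unfolding eigenvector_def by (auto simp: mc_def)
  define w where "w = (\<chi> a. (vec_index v (?g a) :: complex))"
  have "w \<noteq> 0"
  proof
    assume "w = 0"
    hence "vec_index v k = 0" if "k < ?n" for k
      using that g2 unfolding w_def by (metis vec_lambda_beta zero_index)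
    hence "v = 0\<^sub>v ?n" using vc by (intro eq_vecI) auto
    thus False using v0 by simp
  qed
  moreover have "map_matrix complex_of_real B *v w = e *s w"
  proof (rule Finite_Cartesian_Product.vec_eq_iff[THEN iffD2], rule allI)
    fix a
    have "(map_matrix complex_of_real B *v w) $ a = (\<Sum>b\<in>UNIV. complex_of_real (B $ a $ b) * w $ b)"
      by (simp add: matrix_vector_mult_def)
    also have "\<dots> = (\<Sum>k\<in>{0..<?n}. complex_of_real (B $ a $ h k) * vec_index v k)"
      unfolding reindex[OF h] w_def using g2 by (intro sum.cong) auto
    also have "\<dots> = vec_index (mc h B *\<^sub>v v) (?g a)"
      using g1 vc by (simp add: mc_def scalar_prod_def)
    also have "\<dots> = e * w $ a" unfolding vev w_def using g1 vc by simp
    finally show "(map_matrix complex_of_real B *v w) $ a = (e *s w) $ a" by simp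
  qed
  ultimately show ?thesis by blast
qed

lemma ours_to_jnf:
  fixes h :: "nat \<Rightarrow> 'n::finite" and B :: "real^'n^'n"
  assumes h: "bij_betw h {0..<CARD('n)} UNIV" and w: "w \<noteq> 0" "map_matrix complex_of_real B *v w = e *s w"
  shows "eigenvalue (mc h B) e"
proof -
  let ?n = "CARD('n)"
  let ?g = "inv_into {0..<?n} h"
  have g1: "?g a < ?n" "h (?g a) = a" for a
    using h bij_betw_inv_into_left bij_betw_inv_into_right inv_into_into
    unfolding bij_betw_def by (metis UNIV_I atLeastLessThan_iff)+
  define v where "v = Matrix.vec ?n (\<lambda>k. w $ h k)"
  have vc: "v \<in> carrier_vec ?n" unfolding v_def by simp
  have "v \<noteq> 0\<^sub>v ?n"
  proof
    assume "v = 0\<^sub>v ?n"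
    hence "w $ a = 0" for a using g1[of a] unfolding v_def by (metis index_vec index_zero_vec(1))
    hence "w = 0" by (simp add: Finite_Cartesian_Product.vec_eq_iff)
    thus False using w by simp
  qed
  moreover have "mc h B *\<^sub>v v = e \<cdot>\<^sub>v v"
  proof (rule eq_vecI)
    fix k assume "k < dim_vec (e \<cdot>\<^sub>v v)"
    hence k: "k < ?n" unfolding v_def by simp
    have "vec_index (mc h B *\<^sub>v v) k = (\<Sum>l\<in>{0..<?n}. complex_of_real (B $ h k $ h l) * w $ h l)"
      using k by (simp add: mc_def scalar_prod_def v_def)
    also have "\<dots> = (\<Sum>b\<in>UNIV. complex_of_real (B $ h k $ b) * w $ b)"
      unfolding reindex[OF h] ..
    also have "\<dots> = (map_matrix complex_of_real B *v w) $ h k"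
      by (simp add: matrix_vector_mult_def)
    also have "\<dots> = e * w $ h k" using w by simp
    finally show "vec_index (mc h B *\<^sub>v v) k = vec_index (e \<cdot>\<^sub>v v) k" using k by (simp add: v_def)
  qed (simp add: mc_def v_def)
  ultimately show ?thesis unfolding eigenvalue_def eigenvector_def using vc by (auto simp: mc_def)
qed


lemma eig_set_finite:
  fixes h :: "nat \<Rightarrow> 'n::finite" and A :: "real^'n^'n"
  assumes h: "bij_betw h {0..<CARD('n)} UNIV"
  shows "finite {cmod z | z. \<exists>v::complex^'n. v \<noteq> 0 \<and> map_matrix complex_of_real A *v v = z *s v}"
proof -
  have cp: "char_poly (mc h A) \<noteq> 0"
    using degree_monic_char_poly[OF mc_carrier[of h A]] by auto
  have "{cmod z | z. \<exists>v::complex^'n. v \<noteq> 0 \<and> map_matrix complex_of_real A *v v = z *s v}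
     \<subseteq> cmod ` {k. poly (char_poly (mc h A)) k = 0}"
  proof
    fix x assume "x \<in> {cmod z | z. \<exists>v::complex^'n. v \<noteq> 0 \<and> map_matrix complex_of_real A *v v = z *s v}"
    then obtain z v where x: "x = cmod z" and v: "(v::complex^'n) \<noteq> 0" "map_matrix complex_of_real A *v v = z *s v"
      by blast
    have "eigenvalue (mc h A) z" using ours_to_jnf[OF h v] .
    hence "poly (char_poly (mc h A)) z = 0" using eigenvalue_root_char_poly[OF mc_carrier] by blast
    thus "x \<in> cmod ` {k. poly (char_poly (mc h A)) k = 0}" using x by blast
  qed
  moreover have "finite {k. poly (char_poly (mc h A)) k = 0}" using poly_roots_finite[OF cp] .
  ultimately show ?thesis using finite_subset by blast
qed

lemma scale_eig:
  fixes A :: "real^'n^'n" and w :: "complex^'n"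
  assumes r: "r \<noteq> 0" and e: "map_matrix complex_of_real ((1/r) *\<^sub>R A) *v w = e *s w"
  shows "map_matrix complex_of_real A *v w = (complex_of_real r * e) *s w"
proof (rule Finite_Cartesian_Product.vec_eq_iff[THEN iffD2], rule allI)
  fix a
  let ?S = "(\<Sum>b\<in>UNIV. complex_of_real (A $ a $ b) * w $ b)"
  have h1: "(\<Sum>b\<in>UNIV. complex_of_real ((1/r) * A $ a $ b) * w $ b) = e * w $ a"
    using e[THEN arg_cong[where f="\<lambda>x. x $ a"]] by (simp add: matrix_vector_mult_def)
  have h2: "(\<Sum>b\<in>UNIV. complex_of_real ((1/r) * A $ a $ b) * w $ b) = complex_of_real (1/r) * ?S"
    unfolding sum_distrib_left by (intro sum.cong) (simp_all add: mult.assoc)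
  have rr: "complex_of_real r * complex_of_real (1/r) = 1" using r by (simp flip: of_real_mult)
  have "?S = complex_of_real r * (complex_of_real (1/r) * ?S)"
    unfolding mult.assoc[symmetric] rr by simp
  also have "\<dots> = complex_of_real r * e * w $ a" using h1 h2 by (simp add: mult.assoc)
  finally show "(map_matrix complex_of_real A *v w) $ a = ((complex_of_real r * e) *s w) $ a"
    by (simp add: matrix_vector_mult_def)
qed

lemma sr_bound:
  fixes h :: "nat \<Rightarrow> 'n::finite" and A :: "real^'n^'n"
  assumes h: "bij_betw h {0..<CARD('n)} UNIV" and sr: "Defs.spectral_radius A < 1"
  shows "\<exists>r. 0 < r \<and> r < 1 \<and> (\<forall>e. eigenvalue (mc h ((1/r) *\<^sub>R A)) e \<longrightarrow> cmod e < 1)"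
proof -
  let ?E = "{cmod z | z. \<exists>v::complex^'n. v \<noteq> 0 \<and> map_matrix complex_of_real A *v v = z *s v}"
  let ?rho = "Defs.spectral_radius A"
  define r where "r = (max ?rho 0 + 1) / 2"
  have r: "0 < r" "r < 1" "?rho < r" using sr unfolding r_def by auto
  have "cmod e < 1" if ev: "eigenvalue (mc h ((1/r) *\<^sub>R A)) e" for e
  proof -
    obtain w :: "complex^'n" where w: "w \<noteq> 0" "map_matrix complex_of_real ((1/r) *\<^sub>R A) *v w = e *s w"
      using jnf_to_ours[OF h ev] by blast
    have "map_matrix complex_of_real A *v w = (complex_of_real r * e) *s w"
      using scale_eig[OF _ w(2)] r by simp
    hence "cmod (complex_of_real r * e) \<in> ?E" using w(1) by blast
    hence "cmod (complex_of_real r * e) \<le> Max ?E" by (rule Max_ge[OF eig_set_finite[OF h]])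
    hence "cmod (complex_of_real r * e) \<le> ?rho" unfolding Defs.spectral_radius_def .
    hence "r * cmod e \<le> ?rho" using r by (simp add: norm_mult)
    hence "r * cmod e < r * 1" using r by linarith
    thus ?thesis using r(1) by (simp only: mult_less_cancel_left_pos)
  qed
  thus ?thesis using r by blast
qed

lemma pow_bounded:
  fixes h :: "nat \<Rightarrow> 'n::finite" and B :: "real^'n^'n"
  assumes h: "bij_betw h {0..<CARD('n)} UNIV" and ev: "\<And>e. eigenvalue (mc h B) e \<Longrightarrow> cmod e < 1"
  shows "\<exists>c. \<forall>k i j. \<bar>mpow B k $ i $ j\<bar> \<le> c"
proof -
  let ?n = "CARD('n)"
  let ?g = "inv_into {0..<?n} h"
  have g1: "?g a < ?n" "h (?g a) = a" for a
    using h bij_betw_inv_into_left bij_betw_inv_into_right inv_into_into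
    unfolding bij_betw_def by (metis UNIV_I atLeastLessThan_iff)+
  obtain as where cA: "char_poly (mc h B) = (\<Prod>a\<leftarrow>as. [:- a, 1:])"
    using char_poly_factorized[OF mc_carrier] by blast
  have lt: "norm a < 1" if "a \<in> set as" for a
  proof -
    have "poly (char_poly (mc h B)) a = 0" unfolding cA using linear_poly_root[OF that] .
    hence "eigenvalue (mc h B) a" using eigenvalue_root_char_poly[OF mc_carrier] by blast
    thus ?thesis using ev by simp
  qed
  have le1: "\<And>a. a \<in> set as \<Longrightarrow> norm a \<le> 1" using lt by (simp add: less_imp_le)
  have leN: "\<And>a. a \<in> set as \<Longrightarrow> norm a = 1 \<Longrightarrow> length (filter ((=) a) as) \<le> 0"
    using lt by fastforce
  obtain c1 c2 where nb: "\<forall>k. norm_bound (mc h B ^\<^sub>m k) (c1 + c2 * of_nat k ^ (0 - 1))"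
    using factored_char_poly_norm_bound_cof[OF mc_carrier cA le1 leN] by blast
  have "\<bar>mpow B k $ i $ j\<bar> \<le> c1 + c2" for k i j
  proof -
    have "norm ((mc h B ^\<^sub>m k) $$ (?g i, ?g j)) \<le> c1 + c2"
      using nb g1 unfolding norm_bound_def by (simp add: mc_def)
    moreover have "(mc h B ^\<^sub>m k) $$ (?g i, ?g j) = complex_of_real (mpow B k $ i $ j)"
      unfolding mc_pow[OF h, symmetric] using g1 by (simp add: mc_def)
    ultimately show ?thesis by simp
  qed
  thus ?thesis by blast
qed

lemma mpow_scale: "mpow (c *\<^sub>R B) k = c ^ k *\<^sub>R mpow B k"
  by (induction k) (simp_all add: matrix_scalar_ac scalar_matrix_assoc[symmetric])

lemma stable_entries:
  fixes A :: "real^'n^'n"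
  assumes sr: "Defs.spectral_radius A < 1"
  shows "(\<lambda>k. mpow A k $ i $ j) \<longlonglongrightarrow> 0"
proof -
  obtain h :: "nat \<Rightarrow> 'n" where h: "bij_betw h {0..<CARD('n)} UNIV"
    using ex_bij_betw_nat_finite[of "UNIV::'n set"] by auto
  obtain r where r: "0 < r" "r < 1" "\<And>e. eigenvalue (mc h ((1/r) *\<^sub>R A)) e \<Longrightarrow> cmod e < 1"
    using sr_bound[OF h sr] by blast
  obtain c where c: "\<And>k i j. \<bar>mpow ((1/r) *\<^sub>R A) k $ i $ j\<bar> \<le> c"
    using pow_bounded[OF h r(3)] by blast
  have A: "A = r *\<^sub>R ((1/r) *\<^sub>R A)" using r by simp
  have "\<bar>mpow A k $ i $ j\<bar> \<le> c * r ^ k" for k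
  proof -
    have e1: "mpow ((1/r) *\<^sub>R A) k $ i $ j = (1/r) ^ k * mpow A k $ i $ j"
      by (simp add: mpow_scale)
    have e2: "r ^ k * (1/r) ^ k = 1" using r by (simp add: power_mult_distrib[symmetric])
    have "mpow A k $ i $ j = r ^ k * mpow ((1/r) *\<^sub>R A) k $ i $ j"
      unfolding e1 mult.assoc[symmetric] e2 by simp
    hence "\<bar>mpow A k $ i $ j\<bar> = r ^ k * \<bar>mpow ((1/r) *\<^sub>R A) k $ i $ j\<bar>" using r by (simp add: abs_mult)
    also have "\<dots> \<le> r ^ k * c" using c r by (intro mult_left_mono) auto
    finally show ?thesis by (simp add: mult.commute)
  qed
  moreover have "(\<lambda>k. c * r ^ k) \<longlonglongrightarrow> 0"
    using LIMSEQ_realpow_zero[of r] r by (intro tendsto_mult_right_zero) auto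
  ultimately show ?thesis
    using Lim_null_comparison[OF always_eventually, of "\<lambda>k. mpow A k $ i $ j" "\<lambda>k. c * r ^ k"] by simp
qed


hide_const (open) Matrix.mat Matrix.row Matrix.col Matrix.vec
no_notation Matrix.scalar_prod (infix \<open>\<bullet>\<close> 70)
hide_fact (open) Matrix.vec_eq_iff Matrix.transpose_transpose


definition qf :: "real^'n^'n \<Rightarrow> real^'n \<Rightarrow> real" where
  "qf M x = x \<bullet> (M *v x)"

lemma matrix_add_rdistrib': "((B + C) ** A) = (B ** A) + (C ** A)"
  by (vector matrix_matrix_mult_def sum.distrib[symmetric] field_simps)

lemma matrix_sub_ldistrib: "(A::real^'n^'m) ** (B - C) = (A ** B) - (A ** C)"
  by (vector matrix_matrix_mult_def sum_subtractf[symmetric] field_simps)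

lemma matrix_sub_rdistrib: "((B::real^'n^'m) - C) ** A = (B ** A) - (C ** A)"
  by (vector matrix_matrix_mult_def sum_subtractf[symmetric] field_simps)

lemma inner_transpose: "x \<bullet> (M *v y) = (transpose M *v x) \<bullet> (y::real^'n)"
  by (simp add: dot_lmul_matrix)

lemma inner_sym: "transpose S = S \<Longrightarrow> x \<bullet> (S *v y) = (S *v x) \<bullet> (y::real^'n)"
  by (metis inner_transpose)

lemma qf_add: "qf (A + B) x = qf A x + qf B x"
  by (simp add: qf_def matrix_vector_mult_add_rdistrib inner_add_right)
lemma qf_diff: "qf (A - B) x = qf A x - qf B x"
  by (simp add: qf_def matrix_vector_mult_diff_rdistrib inner_diff_right)
lemma qf_scaleR: "qf (c *\<^sub>R A) x = c * qf A x"
  by (simp add: qf_def scaleR_matrix_vector_assoc[symmetric])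
lemma qf_zero[simp]: "qf 0 x = 0"
  by (simp add: qf_def)
lemma qf_zero_vec[simp]: "qf M 0 = 0"
  by (simp add: qf_def)
lemma qf_scale_vec: "qf M (c *\<^sub>R x) = c * c * qf M x"
  by (simp add: qf_def matrix_vector_mult_scaleR)
lemma qf_mat1: "qf (mat 1) x = x \<bullet> x"
  by (simp add: qf_def)
lemma qf_congr: "qf (transpose B ** M ** B) x = qf M (B *v x)"
  unfolding qf_def
  by (simp add: inner_transpose matrix_vector_mul_assoc[symmetric] del: transpose_matrix_vector)

lemma psd_qf: "psd M \<longleftrightarrow> transpose M = M \<and> (\<forall>x. 0 \<le> qf M x)"
  by (simp add: psd_def qf_def)
lemma pd_qf: "pd M \<longleftrightarrow> transpose M = M \<and> (\<forall>x. x \<noteq> 0 \<longrightarrow> 0 < qf M x)"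
  by (simp add: pd_def qf_def)
lemma loewner_qf: "loewner_le X M \<longleftrightarrow> transpose (M - X) = M - X \<and> (\<forall>x. qf X x \<le> qf M x)"
  by (simp add: loewner_le_def psd_qf qf_diff)

lemma pd_psd: "pd M \<Longrightarrow> psd M"
  unfolding pd_qf psd_qf
proof safe
  fix x assume "\<forall>x. x \<noteq> 0 \<longrightarrow> 0 < qf M x"
  thus "0 \<le> qf M x" by (cases "x = 0") (auto intro: less_imp_le)
qed

lemma transpose_add: "transpose (A + B) = transpose A + transpose B"
  by (simp add: transpose_def vec_eq_iff)
lemma transpose_diff: "transpose (A - B) = transpose A - transpose B"
  by (simp add: transpose_def vec_eq_iff)
lemma transpose_zero[simp]: "transpose 0 = 0"
  by (simp add: transpose_def vec_eq_iff)

lemma inv_props: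
  fixes A :: "real^'n^'n"
  assumes "invertible A"
  shows "A ** matrix_inv A = mat 1" "matrix_inv A ** A = mat 1"
proof -
  from assms obtain B where "A ** B = mat 1 \<and> B ** A = mat 1" unfolding invertible_def by blast
  hence "A ** matrix_inv A = mat 1 \<and> matrix_inv A ** A = mat 1"
    unfolding matrix_inv_def by (rule someI)
  thus "A ** matrix_inv A = mat 1" "matrix_inv A ** A = mat 1" by auto
qed

lemma inv_unique:
  fixes A B :: "real^'n^'n"
  assumes "A ** B = mat 1"
  shows "matrix_inv A = B"
proof -
  have inv: "invertible A" using assms invertible_right_inverse by blast
  have "matrix_inv A = matrix_inv A ** (A ** B)" using assms by simp
  also have "\<dots> = B" using inv_props(2)[OF inv] by (simp add: matrix_mul_assoc)
  finally show ?thesis .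
qed

lemma inv_unique_left:
  fixes A B :: "real^'n^'n"
  assumes "B ** A = mat 1"
  shows "matrix_inv A = B"
  using assms inv_unique matrix_left_right_inverse by blast

lemma invertible_inv: "invertible (A::real^'n^'n) \<Longrightarrow> invertible (matrix_inv A)"
  using inv_props invertible_def by blast

lemma inv_inv: "invertible (A::real^'n^'n) \<Longrightarrow> matrix_inv (matrix_inv A) = A"
  using inv_props(2) inv_unique by blast

lemma inv_mulv1: "invertible (A::real^'n^'n) \<Longrightarrow> A *v (matrix_inv A *v x) = x"
  by (simp add: inv_props matrix_vector_mul_assoc)
lemma inv_mulv2: "invertible (A::real^'n^'n) \<Longrightarrow> matrix_inv A *v (A *v x) = x"
  by (simp add: inv_props matrix_vector_mul_assoc)

lemma transpose_inv:
  assumes "invertible (A::real^'n^'n)"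
  shows "transpose (matrix_inv A) = matrix_inv (transpose A)"
proof -
  have "transpose A ** transpose (matrix_inv A) = mat 1"
    by (simp add: matrix_transpose_mul[symmetric] inv_props[OF assms])
  thus ?thesis using inv_unique by metis
qed

lemma sym_inv: "invertible (A::real^'n^'n) \<Longrightarrow> transpose A = A \<Longrightarrow> transpose (matrix_inv A) = matrix_inv A"
  by (simp add: transpose_inv)

lemma inj_invertible:
  fixes A :: "real^'n^'n"
  assumes "\<And>x. A *v x = 0 \<Longrightarrow> x = 0"
  shows "invertible A"
  using assms matrix_left_invertible_ker invertible_left_inverse by blast

lemma pd_invertible: "pd (M::real^'n^'n) \<Longrightarrow> invertible M"
proof (rule inj_invertible)
  fix x assume "pd M" "M *v x = 0"
  thus "x = 0" unfolding pd_qf qf_def by (metis inner_zero_right less_irrefl)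
qed

lemma pd_inv: assumes "pd (M::real^'n^'n)" shows "pd (matrix_inv M)"
proof -
  have inv: "invertible M" using pd_invertible assms by blast
  have sym: "transpose M = M" using assms pd_qf by blast
  have "qf (matrix_inv M) x > 0" if "x \<noteq> 0" for x
  proof -
    let ?y = "matrix_inv M *v x"
    have "?y \<noteq> 0" using that inv_mulv1[OF inv, of x] by auto
    hence "qf M ?y > 0" using assms pd_qf by blast
    moreover have "qf M ?y = qf (matrix_inv M) x"
      unfolding qf_def by (simp add: inv_mulv1[OF inv] inner_commute)
    ultimately show ?thesis by simp
  qed
  thus ?thesis unfolding pd_qf using sym_inv[OF inv sym] by blast
qed

lemma complete_sq:
  fixes P :: "real^'n^'n"
  assumes "pd P"
  shows "qf P u + 2 * (b \<bullet> u) = qf P (u + matrix_inv P *v b) - qf (matrix_inv P) b"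
proof -
  have inv: "invertible P" using pd_invertible assms by blast
  have sym: "transpose P = P" using assms pd_qf by blast
  let ?w = "matrix_inv P *v b"
  have Pw: "P *v ?w = b" using inv_mulv1[OF inv] .
  have "qf P (u + ?w) = qf P u + u \<bullet> (P *v ?w) + ?w \<bullet> (P *v u) + ?w \<bullet> (P *v ?w)"
    unfolding qf_def by (simp add: matrix_vector_right_distrib inner_add_left inner_add_right)
  also have "?w \<bullet> (P *v u) = (P *v ?w) \<bullet> u" using inner_sym[OF sym] by blast
  finally have "qf P (u + ?w) = qf P u + u \<bullet> b + b \<bullet> u + ?w \<bullet> b" unfolding Pw .
  thus ?thesis unfolding qf_def by (simp add: inner_commute)
qed

lemma min_lemma:
  fixes P :: "real^'n^'n"
  assumes "pd P"
  shows "(\<forall>u. 0 \<le> c + 2 * (b \<bullet> u) + qf P u) \<longleftrightarrow> qf (matrix_inv P) b \<le> c"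
proof
  assume h: "\<forall>u. 0 \<le> c + 2 * (b \<bullet> u) + qf P u"
  have "0 \<le> c + 2 * (b \<bullet> (- (matrix_inv P *v b))) + qf P (- (matrix_inv P *v b))" using h by blast
  thus "qf (matrix_inv P) b \<le> c" using complete_sq[OF assms, of "- (matrix_inv P *v b)" b] by simp
next
  assume h: "qf (matrix_inv P) b \<le> c"
  show "\<forall>u. 0 \<le> c + 2 * (b \<bullet> u) + qf P u"
  proof
    fix u
    have "qf P (u + matrix_inv P *v b) \<ge> 0" using assms pd_psd psd_qf by blast
    thus "0 \<le> c + 2 * (b \<bullet> u) + qf P u" using complete_sq[OF assms, of u b] h by linarith
  qed
qed



definition lft :: "real^('a::finite+'b::finite) \<Rightarrow> real^'a" where "lft x = (\<chi> k. x $ Inl k)"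
definition rgt :: "real^('a::finite+'b::finite) \<Rightarrow> real^'b" where "rgt x = (\<chi> k. x $ Inr k)"
definition join :: "real^'a \<Rightarrow> real^'b \<Rightarrow> real^('a::finite+'b::finite)" where
  "join u v = (\<chi> i. case i of Inl k \<Rightarrow> u $ k | Inr k \<Rightarrow> v $ k)"

lemma lft_join[simp]: "lft (join u v) = u" by (simp add: lft_def join_def)
lemma rgt_join[simp]: "rgt (join u v) = v" by (simp add: rgt_def join_def)
lemma join_split: "join (lft x) (rgt x) = x"
  by (simp add: lft_def rgt_def join_def vec_eq_iff split: sum.split)
lemma all_sum: "(\<forall>x::real^('a::finite+'b::finite). P x) \<longleftrightarrow> (\<forall>u v. P (join u v))"
  by (metis join_split)
lemma join_zero[simp]: "join 0 0 = 0"
  by (simp add: join_def vec_eq_iff split: sum.split)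
lemma join_eq_zero[simp]: "join u v = 0 \<longleftrightarrow> u = 0 \<and> v = 0"
  by (metis join_zero lft_join rgt_join)

lemma sum_UNIV_sum: "(\<Sum>i\<in>(UNIV::('a::finite+'b::finite) set). f i) = (\<Sum>k\<in>UNIV. f (Inl k)) + (\<Sum>k\<in>UNIV. f (Inr k))"
  by (subst UNIV_Plus_UNIV[symmetric], subst sum.Plus) (auto simp: comp_def)

lemma vcat_mulv: "vcat P Q *v x = join (P *v x) (Q *v x)"
  by (simp add: vcat_def join_def matrix_vector_mult_def vec_eq_iff split: sum.split)

lemma hcat_mulv: "hcat P Q *v x = P *v lft x + Q *v rgt x"
  by (simp add: hcat_def lft_def rgt_def matrix_vector_mult_def vec_eq_iff sum_UNIV_sum)

lemma inner_join: "join u v \<bullet> join u' v' = u \<bullet> u' + v \<bullet> v'"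
  by (simp add: join_def inner_vec_def sum_UNIV_sum)

lemma qf_Psi:
  fixes A S :: "real^'n^'n" and C :: "real^'n^'m"
  assumes symS: "transpose S = S" and symRi: "transpose (matrix_inv R) = matrix_inv R"
  shows "qf (Psi A C Q R lam S Y) (join x1 (join x2 (join x3 (join x4 x5)))) =
    qf S x1 + 2 * ((sqrt lam *\<^sub>R (transpose A *v (S *v x1))) \<bullet> x2)
    + 2 * ((sqrt (1-lam) *\<^sub>R (transpose A *v (S *v x1))) \<bullet> x3)
    + 2 * ((S *v x1) \<bullet> x4)
    + qf (S + transpose C ** matrix_inv R ** C) x2
    + 2 * ((matrix_inv R *v (C *v x2)) \<bullet> x5)
    + qf S x3 + qf (matrix_inv Q) x4 + qf (Y + matrix_inv R) x5"
proof -
  let ?Ri = "matrix_inv R"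
  have t: "x1 \<bullet> ((c *\<^sub>R (S ** A)) *v x) = (c *\<^sub>R (transpose A *v (S *v x1))) \<bullet> x" for c x
  proof -
    have "x1 \<bullet> ((c *\<^sub>R (S ** A)) *v x) = c * (x1 \<bullet> (S *v (A *v x)))"
      by (simp add: scaleR_matrix_vector_assoc[symmetric] matrix_vector_mul_assoc[symmetric]
          del: transpose_matrix_vector)
    also have "x1 \<bullet> (S *v (A *v x)) = (S *v x1) \<bullet> (A *v x)" using inner_sym[OF symS] .
    also have "\<dots> = (transpose A *v (S *v x1)) \<bullet> x" using inner_transpose .
    finally show ?thesis by simp
  qed
  have t2: "y \<bullet> ((c *\<^sub>R (transpose A ** S)) *v x1) = (c *\<^sub>R (transpose A *v (S *v x1))) \<bullet> y" for c y
    by (simp add: scaleR_matrix_vector_assoc[symmetric] matrix_vector_mul_assoc[symmetric] inner_commute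
          del: transpose_matrix_vector)
  have t3: "x2 \<bullet> ((transpose C ** ?Ri) *v x5) = (?Ri *v (C *v x2)) \<bullet> x5"
  proof -
    have "x2 \<bullet> ((transpose C ** ?Ri) *v x5) = x2 \<bullet> (transpose C *v (?Ri *v x5))"
      by (simp only: matrix_vector_mul_assoc)
    also have "\<dots> = (C *v x2) \<bullet> (?Ri *v x5)" by (simp only: inner_transpose transpose_transpose)
    also have "\<dots> = (?Ri *v (C *v x2)) \<bullet> x5" using inner_sym[OF symRi] .
    finally show ?thesis .
  qed
  have t4: "x5 \<bullet> ((?Ri ** C) *v x2) = (?Ri *v (C *v x2)) \<bullet> x5"
    by (simp only: matrix_vector_mul_assoc[symmetric] inner_commute)
  have t5: "x1 \<bullet> (S *v x4) = (S *v x1) \<bullet> x4" using inner_sym[OF symS] .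
  have t6: "x4 \<bullet> (S *v x1) = (S *v x1) \<bullet> x4" by (simp only: inner_commute)
  show ?thesis
    apply (simp add: qf_def Psi_def Let_def vcat_mulv hcat_mulv inner_join inner_add_right)
    apply (simp only: t t2 t3 t4 t5 t6)
    apply simp
    done
qed

lemma blk2_qf: "qf (blk2 P B B2 D) (join u v) = qf P u + u \<bullet> (B *v v) + v \<bullet> (B2 *v u) + qf D v"
  by (simp add: qf_def blk2_def vcat_mulv hcat_mulv inner_join inner_add_right)


lemma qf_sym_congr: "transpose B = B \<Longrightarrow> qf (B ** M ** B) x = qf M (B *v x)"
  using qf_congr[of B M x] by simp

lemma pd_add_psd: "pd P \<Longrightarrow> psd Q \<Longrightarrow> pd (P + Q)"
  unfolding pd_qf psd_qf by (simp add: qf_add transpose_add add_pos_nonneg)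

lemma psd_add: "psd P \<Longrightarrow> psd Q \<Longrightarrow> psd (P + Q)"
  unfolding psd_qf by (simp add: qf_add transpose_add)

lemma pd_sym: "pd P \<Longrightarrow> transpose P = P" unfolding pd_qf by blast
lemma psd_sym: "psd P \<Longrightarrow> transpose P = P" unfolding psd_qf by blast

lemma sym_mul3: "transpose (W::real^'m^'m) = W \<Longrightarrow> transpose (transpose C ** W ** C) = transpose C ** W ** C"
proof -
  assume h: "transpose W = W"
  have "transpose (transpose C ** W ** C) = transpose C ** transpose W ** transpose (transpose C)"
    by (simp only: matrix_transpose_mul matrix_mul_assoc)
  thus ?thesis using h by simp
qed

definition Wm :: "real^'m^'m \<Rightarrow> real^'m^'m \<Rightarrow> real^'m^'m" where
  "Wm R Y = matrix_inv R - matrix_inv R ** matrix_inv (Y + matrix_inv R) ** matrix_inv R"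

definition Tm :: "real^'n^'m \<Rightarrow> real^'m^'m \<Rightarrow> real^'m^'m \<Rightarrow> real^'n^'n" where
  "Tm C R Y = transpose C ** Wm R Y ** C"

lemma Wm_props:
  assumes R: "pd R" and Y: "psd Y"
  shows "transpose (Wm R Y) = Wm R Y"
    "qf (Wm R Y) y = qf (matrix_inv R) y - qf (matrix_inv (Y + matrix_inv R)) (matrix_inv R *v y)"
    "psd (Wm R Y)"
proof -
  let ?Ri = "matrix_inv R" and ?V = "matrix_inv (Y + matrix_inv R)"
  have Ri: "pd ?Ri" using pd_inv R by blast
  have P: "pd (Y + ?Ri)" by (metis Ri Y pd_add_psd add.commute)
  have symRi: "transpose ?Ri = ?Ri" using Ri pd_sym by blast
  have symV: "transpose ?V = ?V" using pd_inv[OF P] pd_sym by blast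
  show sym: "transpose (Wm R Y) = Wm R Y"
    unfolding Wm_def by (simp add: transpose_diff matrix_transpose_mul symRi symV matrix_mul_assoc)
  show q: "qf (Wm R Y) y = qf ?Ri y - qf ?V (?Ri *v y)" for y
    unfolding Wm_def qf_diff using qf_sym_congr[OF symRi] by simp
  have "qf (Wm R Y) y \<ge> 0" for y
  proof -
    have "\<forall>u. 0 \<le> qf ?Ri y + 2 * ((?Ri *v y) \<bullet> u) + qf (Y + ?Ri) u"
    proof
      fix u
      have "qf ?Ri (y + u) = qf ?Ri y + 2 * ((?Ri *v y) \<bullet> u) + qf ?Ri u"
        unfolding qf_def using inner_sym[OF symRi, of u y]
        by (simp add: matrix_vector_right_distrib inner_add_left inner_add_right inner_commute)
      moreover have "qf ?Ri (y + u) \<ge> 0" "qf Y u \<ge> 0" using Ri Y pd_psd psd_qf by blast+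
      ultimately show "0 \<le> qf ?Ri y + 2 * ((?Ri *v y) \<bullet> u) + qf (Y + ?Ri) u"
        by (simp add: qf_add)
    qed
    thus ?thesis using min_lemma[OF P] q by simp
  qed
  thus "psd (Wm R Y)" using sym psd_qf by blast
qed

lemma Tm_props:
  assumes R: "pd R" and Y: "psd Y"
  shows "psd (Tm C R Y)" "qf (Tm C R Y) x = qf (Wm R Y) (C *v x)"
proof -
  show q: "qf (Tm C R Y) x = qf (Wm R Y) (C *v x)" for x
    unfolding Tm_def by (rule qf_congr)
  show "psd (Tm C R Y)"
    unfolding psd_qf using Wm_props[OF R Y] q sym_mul3 unfolding Tm_def psd_qf by metis
qed

lemma all_join4:
  "(\<forall>x::real^('a::finite+('b::finite+('c::finite+('d::finite+'e::finite)))). P x) \<longleftrightarrow>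
   (\<forall>x1 x2 x3 x4 x5. P (join x1 (join x2 (join x3 (join x4 x5)))))"
  by (metis join_split)

lemma psi_iff:
  fixes A Q S :: "real^'n^'n" and C :: "real^'n^'m" and R Y :: "real^'m^'m"
  assumes S: "pd S" and Y: "psd Y" and R: "pd R" and Q: "pd Q" and lam: "0 \<le> lam" "lam \<le> 1"
  shows "(\<forall>x. 0 \<le> qf (Psi A C Q R lam S Y) x) \<longleftrightarrow>
    (\<forall>z. qf Q z + (1-lam) * qf (matrix_inv S) (transpose A *v z)
         + lam * qf (matrix_inv (S + Tm C R Y)) (transpose A *v z) \<le> qf (matrix_inv S) z)"
proof -
  let ?Ri = "matrix_inv R" and ?V = "matrix_inv (Y + matrix_inv R)" and ?T = "Tm C R Y"
  let ?X = "matrix_inv S" and ?F = "matrix_inv (S + Tm C R Y)" and ?At = "transpose A"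
  define a where "a = sqrt lam"
  define b where "b = sqrt (1 - lam)"
  have aa: "a * a = lam" using lam a_def by simp
  have bb: "b * b = 1 - lam" using lam b_def by simp
  have Ri: "pd ?Ri" using pd_inv R by blast
  have P5: "pd (Y + ?Ri)" by (metis Ri Y pd_add_psd add.commute)
  have symRi: "transpose ?Ri = ?Ri" using Ri pd_sym by blast
  have symS: "transpose S = S" using S pd_sym by blast
  have Qi: "pd (matrix_inv Q)" using pd_inv Q by blast
  have QQ: "matrix_inv (matrix_inv Q) = Q" using inv_inv pd_invertible Q by blast
  have ST: "pd (S + ?T)" using pd_add_psd S Tm_props(1)[OF R Y] by blast
  have SS: "matrix_inv ?X = S" using inv_inv pd_invertible S by blast
  have invS: "invertible S" using pd_invertible S by blast
  define q5 where "q5 x1 x2 x3 x4 = qf S x1 + 2 * ((a *\<^sub>R (?At *v (S *v x1))) \<bullet> x2)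
    + 2 * ((b *\<^sub>R (?At *v (S *v x1))) \<bullet> x3) + 2 * ((S *v x1) \<bullet> x4)
    + qf (S + ?T) x2 + qf S x3 + qf (matrix_inv Q) x4" for x1 x2 x3 x4
  have e5: "(\<forall>x5. 0 \<le> qf (Psi A C Q R lam S Y) (join x1 (join x2 (join x3 (join x4 x5)))))
     \<longleftrightarrow> 0 \<le> q5 x1 x2 x3 x4" for x1 x2 x3 x4
  proof -
    have qq: "qf (S + transpose C ** ?Ri ** C) x2 - qf ?V (?Ri *v (C *v x2)) = qf (S + ?T) x2"
    proof -
      have "qf ?T x2 = qf ?Ri (C *v x2) - qf ?V (?Ri *v (C *v x2))"
        using Tm_props(2)[OF R Y] Wm_props(2)[OF R Y] by simp
      moreover have "qf (transpose C ** ?Ri ** C) x2 = qf ?Ri (C *v x2)" by (rule qf_congr)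
      ultimately show ?thesis by (simp add: qf_add)
    qed
    have "(\<forall>x5. 0 \<le> qf (Psi A C Q R lam S Y) (join x1 (join x2 (join x3 (join x4 x5)))))
      \<longleftrightarrow> (\<forall>x5. 0 \<le> (q5 x1 x2 x3 x4 - qf (S + ?T) x2 + qf (S + transpose C ** ?Ri ** C) x2)
              + 2 * ((?Ri *v (C *v x2)) \<bullet> x5) + qf (Y + ?Ri) x5)"
      unfolding qf_Psi[OF symS symRi] q5_def a_def b_def by (auto simp: algebra_simps)
    also have "\<dots> \<longleftrightarrow> qf ?V (?Ri *v (C *v x2)) \<le> q5 x1 x2 x3 x4 - qf (S + ?T) x2 + qf (S + transpose C ** ?Ri ** C) x2"
      by (rule min_lemma[OF P5])
    also have "\<dots> \<longleftrightarrow> 0 \<le> q5 x1 x2 x3 x4" using qq by linarith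
    finally show ?thesis .
  qed
  define q4 where "q4 x1 x2 x3 = qf S x1 + 2 * ((a *\<^sub>R (?At *v (S *v x1))) \<bullet> x2)
    + 2 * ((b *\<^sub>R (?At *v (S *v x1))) \<bullet> x3)
    + qf (S + ?T) x2 + qf S x3 - qf Q (S *v x1)" for x1 x2 x3
  have e4: "(\<forall>x4. 0 \<le> q5 x1 x2 x3 x4) \<longleftrightarrow> 0 \<le> q4 x1 x2 x3" for x1 x2 x3
  proof -
    have "(\<forall>x4. 0 \<le> q5 x1 x2 x3 x4) \<longleftrightarrow> (\<forall>x4. 0 \<le> (q4 x1 x2 x3 + qf Q (S *v x1)) + 2 * ((S *v x1) \<bullet> x4) + qf (matrix_inv Q) x4)"
      unfolding q5_def q4_def by (auto simp: algebra_simps)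
    also have "\<dots> \<longleftrightarrow> qf (matrix_inv (matrix_inv Q)) (S *v x1) \<le> q4 x1 x2 x3 + qf Q (S *v x1)"
      by (rule min_lemma[OF Qi])
    finally show ?thesis using QQ by simp
  qed
  define q3 where "q3 x1 x2 = qf S x1 + 2 * ((a *\<^sub>R (?At *v (S *v x1))) \<bullet> x2)
    + qf (S + ?T) x2 - qf Q (S *v x1) - (1 - lam) * qf ?X (?At *v (S *v x1))" for x1 x2
  have e3: "(\<forall>x3. 0 \<le> q4 x1 x2 x3) \<longleftrightarrow> 0 \<le> q3 x1 x2" for x1 x2
  proof -
    have "(\<forall>x3. 0 \<le> q4 x1 x2 x3) \<longleftrightarrow> (\<forall>x3. 0 \<le> (q3 x1 x2 + (1 - lam) * qf ?X (?At *v (S *v x1))) + 2 * ((b *\<^sub>R (?At *v (S *v x1))) \<bullet> x3) + qf S x3)"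
      unfolding q4_def q3_def by (auto simp: algebra_simps)
    also have "\<dots> \<longleftrightarrow> qf ?X (b *\<^sub>R (?At *v (S *v x1))) \<le> q3 x1 x2 + (1 - lam) * qf ?X (?At *v (S *v x1))"
      by (rule min_lemma[OF S])
    finally show ?thesis by (simp add: qf_scale_vec bb)
  qed
  define q2 where "q2 x1 = qf S x1 - qf Q (S *v x1) - (1 - lam) * qf ?X (?At *v (S *v x1))
     - lam * qf ?F (?At *v (S *v x1))" for x1
  have e2: "(\<forall>x2. 0 \<le> q3 x1 x2) \<longleftrightarrow> 0 \<le> q2 x1" for x1
  proof -
    have "(\<forall>x2. 0 \<le> q3 x1 x2) \<longleftrightarrow> (\<forall>x2. 0 \<le> (q2 x1 + lam * qf ?F (?At *v (S *v x1))) + 2 * ((a *\<^sub>R (?At *v (S *v x1))) \<bullet> x2) + qf (S + ?T) x2)"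
      unfolding q3_def q2_def by (auto simp: algebra_simps)
    also have "\<dots> \<longleftrightarrow> qf ?F (a *\<^sub>R (?At *v (S *v x1))) \<le> q2 x1 + lam * qf ?F (?At *v (S *v x1))"
      by (rule min_lemma[OF ST])
    finally show ?thesis by (simp add: qf_scale_vec aa)
  qed
  have e1: "(\<forall>x1. 0 \<le> q2 x1) \<longleftrightarrow> (\<forall>z. qf Q z + (1-lam) * qf ?X (?At *v z) + lam * qf ?F (?At *v z) \<le> qf ?X z)"
  proof -
    have sub: "q2 (?X *v z) = qf ?X z - (qf Q z + (1-lam) * qf ?X (?At *v z) + lam * qf ?F (?At *v z))" for z
    proof -
      have "qf S (?X *v z) = qf ?X z"
        unfolding qf_def using inv_mulv1[OF invS] by (simp add: inner_commute)
      thus ?thesis unfolding q2_def using inv_mulv1[OF invS] by simp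
    qed
    show ?thesis
    proof
      assume h: "\<forall>x1. 0 \<le> q2 x1"
      show "\<forall>z. qf Q z + (1-lam) * qf ?X (?At *v z) + lam * qf ?F (?At *v z) \<le> qf ?X z"
        using h sub by (metis diff_ge_0_iff_ge)
    next
      assume h: "\<forall>z. qf Q z + (1-lam) * qf ?X (?At *v z) + lam * qf ?F (?At *v z) \<le> qf ?X z"
      show "\<forall>x1. 0 \<le> q2 x1"
      proof
        fix x1
        have "x1 = ?X *v (S *v x1)" using inv_mulv2[OF invS] by simp
        thus "0 \<le> q2 x1" using h sub by (metis diff_ge_0_iff_ge)
      qed
    qed
  qed
  show ?thesis
    unfolding all_join4 using e5 e4 e3 e2 e1 by simp
qed


lemma matrix_eqI: "(\<And>x. A *v x = B *v x) \<Longrightarrow> A = (B::real^'n^'m)"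
  using matrix_eq by blast

lemma invertible_I_plus:
  fixes M Y :: "real^'m^'m"
  assumes M: "pd M" and Y: "psd Y"
  shows "invertible (mat 1 + M ** Y)"
proof (rule inj_invertible)
  fix v assume h: "(mat 1 + M ** Y) *v v = 0"
  define u where "u = Y *v v"
  have v: "v = - (M *v u)" using h unfolding u_def
    by (simp add: matrix_vector_mult_add_rdistrib matrix_vector_mul_assoc[symmetric] add_eq_0_iff)
  have "u \<bullet> v = u \<bullet> (- (M *v u))" by (subst v) (rule refl)
  hence "u \<bullet> v = - qf M u" by (simp add: qf_def)
  moreover have "u \<bullet> v = qf Y v" unfolding qf_def u_def by (simp add: inner_commute)
  moreover have "qf Y v \<ge> 0" "qf M u \<ge> 0" using Y M pd_psd psd_qf by blast+
  ultimately have "qf M u = 0" by linarith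
  moreover have "u \<noteq> 0 \<Longrightarrow> 0 < qf M u" using M pd_qf by blast
  ultimately have "u = 0" by force
  thus "v = 0" using v by simp
qed

lemma psd_congr: "psd X \<Longrightarrow> psd (B ** X ** transpose B)"
proof -
  assume X: "psd X"
  have "transpose (B ** X ** transpose B) = B ** X ** transpose B"
    using psd_sym[OF X] by (simp add: matrix_transpose_mul matrix_mul_assoc)
  moreover have "qf (B ** X ** transpose B) x \<ge> 0" for x
  proof -
    have "0 \<le> qf X (transpose B *v x)" using X psd_qf by blast
    thus ?thesis using qf_congr[of "transpose B" X x] by simp
  qed
  ultimately show ?thesis using psd_qf by blast
qed

lemma g_ol_eq:
  fixes A Q X :: "real^'n^'n" and C :: "real^'n^'m" and R Y :: "real^'m^'m"
  assumes X: "pd X" and Y: "psd Y" and R: "pd R"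
  shows "g_ol A C Q lam R Y X = Q + (1 - lam) *\<^sub>R (A ** X ** transpose A)
     + lam *\<^sub>R (A ** matrix_inv (matrix_inv X + Tm C R Y) ** transpose A)"
proof -
  let ?Ri = "matrix_inv R" and ?V = "matrix_inv (Y + matrix_inv R)" and ?W = "Wm R Y"
  let ?P = "C ** X ** transpose C" and ?S = "matrix_inv X"
  let ?Z = "mat 1 + (C ** X ** transpose C + R) ** Y"
  let ?K = "Y ** matrix_inv ?Z"
  have Ri: "pd ?Ri" using pd_inv R by blast
  have P5: "pd (Y + ?Ri)" by (metis Ri Y pd_add_psd add.commute)
  have invR: "invertible R" using R pd_invertible by blast
  have invV: "invertible (Y + ?Ri)" using P5 pd_invertible by blast
  have invX: "invertible X" using X pd_invertible by blast
  have PR: "pd (?P + R)" using pd_add_psd[OF R psd_congr[OF pd_psd[OF X]]] by (simp add: add.commute)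
  have invZ: "invertible ?Z" using invertible_I_plus[OF PR Y] .
  have Wv: "?W *v y = ?Ri *v y - ?Ri *v (?V *v (?Ri *v y))" for y
    unfolding Wm_def by (simp add: matrix_vector_mult_diff_rdistrib matrix_vector_mul_assoc[symmetric] del: transpose_matrix_vector)
  have a: "?W *v x + ?W *v (R *v (Y *v x)) = Y *v x" for x
  proof -
    have h1: "?V *v (Y *v x) + ?V *v (?Ri *v x) = x"
      using inv_mulv2[OF invV, of x] by (simp add: matrix_vector_mult_add_rdistrib matrix_vector_right_distrib)
    have h2: "?Ri *v (?V *v (Y *v x)) + ?Ri *v (?V *v (?Ri *v x)) = ?Ri *v x"
      using h1 by (metis matrix_vector_right_distrib)
    have RR: "?Ri *v (R *v y) = y" for y using inv_mulv2[OF invR] .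
    have "?W *v x + ?W *v (R *v (Y *v x)) = (?Ri *v x - ?Ri *v (?V *v (?Ri *v x)))
       + (?Ri *v (R *v (Y *v x)) - ?Ri *v (?V *v (?Ri *v (R *v (Y *v x)))))"
      unfolding Wv ..
    also have "\<dots> = Y *v x + (?Ri *v x - (?Ri *v (?V *v (Y *v x)) + ?Ri *v (?V *v (?Ri *v x))))"
      unfolding RR by (simp add: algebra_simps)
    also have "\<dots> = Y *v x" unfolding h2 by simp
    finally show ?thesis .
  qed
  have b1: "(mat 1 + ?W ** ?P) ** Y = ?W ** ?Z"
  proof (rule matrix_eqI)
    fix x
    show "((mat 1 + ?W ** ?P) ** Y) *v x = (?W ** ?Z) *v x"
      using a[of x]
      by (simp add: matrix_vector_mul_assoc[symmetric] matrix_vector_mult_add_rdistrib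
          matrix_vector_right_distrib algebra_simps del: transpose_matrix_vector)
  qed
  have b: "(mat 1 + ?W ** ?P) ** ?K = ?W"
  proof -
    have "(mat 1 + ?W ** ?P) ** ?K = ((mat 1 + ?W ** ?P) ** Y) ** matrix_inv ?Z"
      by (simp add: matrix_mul_assoc)
    also have "\<dots> = ?W ** (?Z ** matrix_inv ?Z)" unfolding b1 by (simp add: matrix_mul_assoc)
    also have "\<dots> = ?W" using inv_props(1)[OF invZ] by simp
    finally show ?thesis .
  qed
  have bv: "?K *v y + ?W *v (?P *v (?K *v y)) = ?W *v y" for y
  proof -
    have "((mat 1 + ?W ** ?P) ** ?K) *v y = ?W *v y" using b by simp
    thus ?thesis by (simp add: matrix_vector_mul_assoc[symmetric] matrix_vector_mult_add_rdistrib
          del: transpose_matrix_vector)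
  qed
  have c: "(?S + Tm C R Y) ** (X - X ** transpose C ** ?K ** C ** X) = mat 1"
  proof (rule matrix_eqI)
    fix x
    let ?y = "C *v (X *v x)"
    have SX: "?S *v (X *v z) = z" for z using inv_mulv2[OF invX] .
    have e: "?W *v ?y - ?K *v ?y - ?W *v (?P *v (?K *v ?y)) = 0" unfolding diff_diff_eq bv[of ?y] by simp
    have "((?S + Tm C R Y) ** (X - X ** transpose C ** ?K ** C ** X)) *v x
       = x - transpose C *v (?K *v ?y) + transpose C *v (?W *v ?y)
         - transpose C *v (?W *v (?P *v (?K *v ?y)))"
      unfolding Tm_def
      by (simp add: matrix_vector_mul_assoc[symmetric] matrix_vector_mult_add_rdistrib
          matrix_vector_mult_diff_rdistrib matrix_vector_mult_diff_distrib SX del: transpose_matrix_vector)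
    also have "\<dots> = x + transpose C *v (?W *v ?y - ?K *v ?y - ?W *v (?P *v (?K *v ?y)))"
      by (simp add: matrix_vector_mult_diff_distrib del: transpose_matrix_vector)
    also have "\<dots> = x" using e by simp
    finally show "((?S + Tm C R Y) ** (X - X ** transpose C ** ?K ** C ** X)) *v x = mat 1 *v x" by simp
  qed
  have F: "matrix_inv (?S + Tm C R Y) = X - X ** transpose C ** ?K ** C ** X"
    using inv_unique[OF c] .
  show ?thesis
  proof (rule matrix_eqI)
    fix x
    show "g_ol A C Q lam R Y X *v x = (Q + (1 - lam) *\<^sub>R (A ** X ** transpose A)
     + lam *\<^sub>R (A ** matrix_inv (?S + Tm C R Y) ** transpose A)) *v x"
      unfolding F g_ol_def
      by (simp add: matrix_vector_mul_assoc[symmetric] matrix_vector_mult_add_rdistrib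
          matrix_vector_mult_diff_rdistrib scaleR_matrix_vector_assoc[symmetric]
          matrix_vector_mult_diff_distrib algebra_simps del: transpose_matrix_vector)
  qed
qed



lemma qf_expand: "qf M z = (\<Sum>i\<in>UNIV. \<Sum>j\<in>UNIV. z$i * M$i$j * z$j)"
  by (simp add: qf_def inner_vec_def matrix_vector_mult_def sum_distrib_left mult.assoc)

lemma qf_abs_bound: "\<bar>qf (D::real^'n^'n) z\<bar> \<le> (\<Sum>i\<in>UNIV. \<Sum>j\<in>UNIV. \<bar>D$i$j\<bar>) * (z \<bullet> z)"
proof -
  have zz: "\<bar>z$i\<bar> * \<bar>z$j\<bar> \<le> z \<bullet> z" for i j
  proof -
    have "\<bar>z$i\<bar> * \<bar>z$j\<bar> \<le> norm z * norm z"
      by (intro mult_mono component_le_norm_cart) auto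
    also have "\<dots> = z \<bullet> z" by (simp add: power2_norm_eq_inner[symmetric] power2_eq_square)
    finally show ?thesis .
  qed
  have "\<bar>qf D z\<bar> \<le> (\<Sum>i\<in>UNIV. \<Sum>j\<in>UNIV. \<bar>z$i * D$i$j * z$j\<bar>)"
    unfolding qf_expand by (rule order.trans[OF sum_abs sum_mono]) (rule sum_abs)
  also have "\<dots> \<le> (\<Sum>i\<in>UNIV. \<Sum>j\<in>UNIV. \<bar>D$i$j\<bar> * (z \<bullet> z))"
  proof (intro sum_mono)
    fix i j
    have "\<bar>z$i * D$i$j * z$j\<bar> = \<bar>D$i$j\<bar> * (\<bar>z$i\<bar> * \<bar>z$j\<bar>)" by (simp add: abs_mult)
    also have "\<dots> \<le> \<bar>D$i$j\<bar> * (z \<bullet> z)" by (intro mult_left_mono zz) auto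
    finally show "\<bar>z$i * D$i$j * z$j\<bar> \<le> \<bar>D$i$j\<bar> * (z \<bullet> z)" .
  qed
  also have "\<dots> = (\<Sum>i\<in>UNIV. \<Sum>j\<in>UNIV. \<bar>D$i$j\<bar>) * (z \<bullet> z)"
    by (simp add: sum_distrib_right)
  finally show ?thesis .
qed

lemma qf_upper: "\<exists>mu>0. \<forall>z. qf (D::real^'n^'n) z \<le> mu * (z \<bullet> z)"
proof -
  let ?s = "(\<Sum>i\<in>UNIV. \<Sum>j\<in>UNIV. \<bar>D$i$j\<bar>) + 1"
  have "?s > 0" by (simp add: add_nonneg_pos sum_nonneg)
  moreover have "qf D z \<le> ?s * (z \<bullet> z)" for z
  proof -
    have "qf D z \<le> (\<Sum>i\<in>UNIV. \<Sum>j\<in>UNIV. \<bar>D$i$j\<bar>) * (z \<bullet> z)" using qf_abs_bound[of D z] by linarith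
    also have "\<dots> \<le> ?s * (z \<bullet> z)" by (intro mult_right_mono) auto
    finally show ?thesis .
  qed
  ultimately show ?thesis by blast
qed

lemma qf_lower:
  assumes "pd (M::real^'n^'n)"
  shows "\<exists>q>0. \<forall>z. q * (z \<bullet> z) \<le> qf M z"
proof -
  have cont: "continuous_on (sphere 0 1) (qf M)"
    unfolding qf_def[abs_def]
    by (intro continuous_on_inner continuous_on_id matrix_vector_mult_linear_continuous_on)
  obtain i :: 'n where True by blast
  have ne: "sphere (0::real^'n) 1 \<noteq> {}"
    using norm_axis_1[of i] by (metis empty_iff mem_sphere_0)
  obtain x0 where x0: "x0 \<in> sphere 0 1" "\<forall>y\<in>sphere 0 1. qf M x0 \<le> qf M y"
    using continuous_attains_inf[OF compact_sphere ne cont] by blast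
  have "x0 \<noteq> 0" using x0(1) by auto
  hence q: "qf M x0 > 0" using assms pd_qf by blast
  have "qf M x0 * (z \<bullet> z) \<le> qf M z" for z
  proof (cases "z = 0")
    case True thus ?thesis by simp
  next
    case False
    let ?u = "(1 / norm z) *\<^sub>R z"
    have "?u \<in> sphere 0 1" using False by (simp add: norm_scaleR)
    hence "qf M x0 \<le> qf M ?u" using x0 by blast
    moreover have "qf M z = (norm z * norm z) * qf M ?u"
      using False by (simp add: qf_scale_vec)
    moreover have "z \<bullet> z = norm z * norm z" by (simp add: power2_norm_eq_inner[symmetric] power2_eq_square)
    moreover have "norm z * norm z * qf M x0 \<le> norm z * norm z * qf M ?u"
      using calculation(1) by (intro mult_left_mono) auto
    ultimately show ?thesis by (simp add: mult.commute)
  qed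
  thus ?thesis using q by blast
qed

lemma sym_qf_eq:
  fixes A B :: "real^'n^'n"
  assumes "transpose A = A" "transpose B = B" "\<And>z. qf A z = qf B z"
  shows "A = B"
proof -
  let ?D = "A - B"
  have sD: "transpose ?D = ?D" using assms by (simp add: transpose_diff)
  have qD: "qf ?D z = 0" for z using assms(3) by (simp add: qf_diff)
  have "?D *v y = 0" for y
  proof -
    let ?x = "?D *v y"
    have "qf ?D (?x + y) = qf ?D ?x + 2 * (?x \<bullet> (?D *v y)) + qf ?D y"
      unfolding qf_def using inner_sym[OF sD, of ?x y]
      by (simp add: matrix_vector_right_distrib inner_add_left inner_add_right inner_commute)
    hence "?x \<bullet> ?x = 0" using qD by simp
    thus ?thesis by simp
  qed
  hence "?D = 0" by (intro matrix_eqI) simp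
  thus ?thesis by simp
qed

lemma pd_scale: "pd X \<Longrightarrow> 0 < t \<Longrightarrow> pd (t *\<^sub>R X)"
  unfolding pd_qf by (simp add: transpose_scalar qf_scaleR)

lemma axis_qf: "axis i 1 \<bullet> (M *v axis j 1) = (M::real^'n^'n) $ i $ j"
  by (simp add: inner_vec_def matrix_vector_mult_def axis_def if_distrib if_distribR cong: if_cong)

lemma entry_qf:
  assumes "transpose (M::real^'n^'n) = M"
  shows "M $ i $ j = (qf M (axis i 1 + axis j 1) - qf M (axis i 1) - qf M (axis j 1)) / 2"
proof -
  have "qf M (axis i 1 + axis j 1) = qf M (axis i 1) + axis i 1 \<bullet> (M *v axis j 1) + axis j 1 \<bullet> (M *v axis i 1) + qf M (axis j 1)"
    unfolding qf_def by (simp add: matrix_vector_right_distrib inner_add_left inner_add_right)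
  moreover have "axis j 1 \<bullet> (M *v axis i 1) = axis i 1 \<bullet> (M *v axis j 1)"
    using inner_sym[OF assms] by (simp add: inner_commute)
  ultimately show ?thesis unfolding axis_qf by simp
qed

locale rmap =
  fixes G :: "real^'n^'n \<Rightarrow> real^'n^'n" and Q :: "real^'n^'n"
  assumes Qpd: "pd Q"
  and H0: "\<And>X. pd X \<Longrightarrow> pd (G X)"
  and H0': "\<And>X z. pd X \<Longrightarrow> qf Q z \<le> qf (G X) z"
  and H1: "\<And>X1 X2 z. pd X1 \<Longrightarrow> (\<And>z. qf X1 z \<le> qf X2 z) \<Longrightarrow> pd X2 \<Longrightarrow> qf (G X1) z \<le> qf (G X2) z"
  and H2: "\<And>X t z. pd X \<Longrightarrow> 0 < t \<Longrightarrow> t \<le> 1 \<Longrightarrow> t * qf (G X) z + (1-t) * qf Q z \<le> qf (G (t *\<^sub>R X)) z"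
begin

lemma comparison:
  assumes Xs: "pd Xs" "G Xs = Xs" and P: "pd P" "\<And>z. qf (G P) z \<le> qf P z"
  shows "qf Xs z \<le> qf P z"
proof -
  obtain q where q: "q > 0" "\<And>z. q * (z \<bullet> z) \<le> qf Q z" using qf_lower[OF Qpd] by blast
  obtain mu where mu: "mu > 0" "\<And>z. qf Xs z \<le> mu * (z \<bullet> z)" using qf_upper by blast
  define e where "e = min 1 (q / mu)"
  have e: "0 < e" "e \<le> 1" "e \<le> q / mu" using q mu by (auto simp: e_def)
  have eQ: "e * qf Xs z \<le> qf Q z" for z
  proof -
    have pos: "qf Xs z \<ge> 0" using Xs(1) pd_psd psd_qf by blast
    have "e * qf Xs z \<le> (q / mu) * qf Xs z" using e(3) pos by (rule mult_right_mono)
    also have "\<dots> \<le> (q / mu) * (mu * (z \<bullet> z))" using mu q by (intro mult_left_mono) auto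
    also have "\<dots> = q * (z \<bullet> z)" using mu by simp
    also have "\<dots> \<le> qf Q z" using q by blast
    finally show ?thesis .
  qed
  define t where "t k = 1 - (1 - e) ^ Suc k" for k
  have t01: "0 < t k" "t k \<le> 1" for k
  proof -
    have "(1 - e) ^ k \<le> 1" using e by (intro power_le_one) auto
    hence "(1 - e) * (1 - e) ^ k \<le> (1 - e)" using e by (intro mult_left_le) auto
    hence "(1 - e) ^ Suc k \<le> (1 - e)" by simp
    thus "0 < t k" using e unfolding t_def by linarith
    show "t k \<le> 1" using e unfolding t_def by simp
  qed
  have tS: "t (Suc k) = t k + (1 - t k) * e" for k
    unfolding t_def by (simp add: algebra_simps)
  have main: "t k * qf Xs z \<le> qf P z" for k z
  proof (induction k arbitrary: z)
    case 0
    have "t 0 = e" unfolding t_def by simp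
    hence "t 0 * qf Xs z \<le> qf Q z" using eQ by simp
    also have "\<dots> \<le> qf (G P) z" using H0' P(1) .
    also have "\<dots> \<le> qf P z" using P(2) .
    finally show ?case .
  next
    case (Suc k)
    have pdt: "pd (t k *\<^sub>R Xs)" using pd_scale Xs(1) t01 by blast
    have "qf (G (t k *\<^sub>R Xs)) z \<le> qf (G P) z"
      using H1[OF pdt _ P(1)] Suc.IH by (simp add: qf_scaleR)
    also have "\<dots> \<le> qf P z" using P(2) .
    finally have A: "qf (G (t k *\<^sub>R Xs)) z \<le> qf P z" .
    have B: "t k * qf Xs z + (1 - t k) * qf Q z \<le> qf (G (t k *\<^sub>R Xs)) z"
      using H2[OF Xs(1) t01] Xs(2) by simp
    have C: "(1 - t k) * (e * qf Xs z) \<le> (1 - t k) * qf Q z"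
      using eQ t01 by (intro mult_left_mono) auto
    have "t (Suc k) * qf Xs z = t k * qf Xs z + (1 - t k) * (e * qf Xs z)"
      unfolding tS by (simp add: algebra_simps)
    thus ?case using A B C by linarith
  qed
  have lim: "(\<lambda>k. t k * qf Xs z) \<longlonglongrightarrow> qf Xs z"
  proof -
    have "(\<lambda>k. (1 - e) ^ k) \<longlonglongrightarrow> 0" using e by (intro LIMSEQ_realpow_zero) auto
    hence "(\<lambda>k. (1 - e) ^ Suc k) \<longlonglongrightarrow> 0" by (rule LIMSEQ_Suc)
    hence "(\<lambda>k. (1 - (1 - e) ^ Suc k) * qf Xs z) \<longlonglongrightarrow> (1 - 0) * qf Xs z"
      by (intro tendsto_intros)
    thus ?thesis unfolding t_def by simp
  qed
  show ?thesis using LIMSEQ_le_const2[OF lim] main by blast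
qed

lemma uniqueness:
  assumes "pd X1" "G X1 = X1" "pd X2" "G X2 = X2"
  shows "X1 = X2"
proof (rule sym_qf_eq)
  show "transpose X1 = X1" "transpose X2 = X2" using assms pd_sym by blast+
  fix z
  show "qf X1 z = qf X2 z"
    using comparison[OF assms(1,2) assms(3)] comparison[OF assms(3,4) assms(1)] assms
    by (metis order.antisym order.refl)
qed

lemma existence:
  assumes P: "pd P" "\<And>z. qf (G P) z \<le> qf P z"
  shows "\<exists>Xs. pd Xs \<and> G Xs = Xs \<and> (\<forall>z. qf Xs z \<le> qf P z)"
proof -
  define X where "X k = (G ^^ k) P" for k
  have XS: "X (Suc k) = G (X k)" for k unfolding X_def by simp
  have inv: "pd (X k) \<and> (\<forall>z. qf (X (Suc k)) z \<le> qf (X k) z)" for k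
  proof (induction k)
    case 0
    show ?case using P unfolding X_def by simp
  next
    case (Suc k)
    have pd1: "pd (X (Suc k))" using H0 Suc XS by simp
    moreover have "qf (X (Suc (Suc k))) z \<le> qf (X (Suc k)) z" for z
      unfolding XS[of "Suc k"] XS[of k]
      by (rule H1) (use Suc pd1 XS in auto)
    ultimately show ?case by blast
  qed
  have pdX: "pd (X k)" for k using inv by blast
  have decr: "qf (X (Suc k)) z \<le> qf (X k) z" for k z using inv by blast
  have symX: "transpose (X k) = X k" for k using pdX pd_sym by blast
  have lowX: "qf Q z \<le> qf (X k) z" for k z
  proof (cases k)
    case 0
    thus ?thesis using H0'[OF P(1), of z] P(2)[of z] unfolding X_def by simp
  next
    case (Suc k')
    thus ?thesis using H0'[OF pdX[of k']] XS by simp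
  qed
  have Qnn: "0 \<le> qf Q z" for z using Qpd pd_psd psd_qf by blast
  have dec: "decseq (\<lambda>k. qf (X k) z)" for z by (rule decseq_SucI) (rule decr)
  have conv: "convergent (\<lambda>k. qf (X k) z)" for z
  proof -
    have nn: "\<forall>i. 0 \<le> qf (X i) z" using lowX Qnn by (meson order.trans)
    obtain L where "(\<lambda>k. qf (X k) z) \<longlonglongrightarrow> L"
      using decseq_convergent[OF dec nn] by blast
    thus ?thesis by (rule convergentI)
  qed
  define L where "L i j = lim (\<lambda>k. X k $ i $ j)" for i j
  have entry_lim: "(\<lambda>k. X k $ i $ j) \<longlonglongrightarrow> L i j" for i j
  proof -
    have c3: "(\<lambda>k. qf (X k) v) \<longlonglongrightarrow> lim (\<lambda>k. qf (X k) v)" for v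
      using conv[of v] by (simp only: convergent_LIMSEQ_iff)
    have "(\<lambda>k. (qf (X k) (axis i 1 + axis j 1) - qf (X k) (axis i 1) - qf (X k) (axis j 1)) / 2)
      \<longlonglongrightarrow> (lim (\<lambda>k. qf (X k) (axis i 1 + axis j 1)) - lim (\<lambda>k. qf (X k) (axis i 1))
           - lim (\<lambda>k. qf (X k) (axis j 1))) / 2"
      by (intro tendsto_divide tendsto_diff c3 tendsto_const) simp
    moreover have "(\<lambda>k. (qf (X k) (axis i 1 + axis j 1) - qf (X k) (axis i 1) - qf (X k) (axis j 1)) / 2)
       = (\<lambda>k. X k $ i $ j)"
      by (intro ext) (rule entry_qf[OF symX, symmetric])
    ultimately have "convergent (\<lambda>k. X k $ i $ j)"
      unfolding convergent_def by auto
    thus ?thesis unfolding L_def by (simp only: convergent_LIMSEQ_iff)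
  qed
  define Xs where "Xs = (\<chi> i j. L i j)"
  have qf_lim: "(\<lambda>k. qf (X k) z) \<longlonglongrightarrow> qf Xs z" for z
    unfolding qf_expand Xs_def
    by (simp only: vec_lambda_beta) (intro tendsto_sum tendsto_mult tendsto_const entry_lim)
  have symXs: "transpose Xs = Xs"
  proof -
    have "L i j = L j i" for i j
    proof -
      have e: "X k $ j $ i = X k $ i $ j" for k
      proof -
        have "transpose (X k) $ i $ j = X k $ j $ i" by (simp add: transpose_def)
        thus ?thesis using symX[of k] by simp
      qed
      have "(\<lambda>k. X k $ j $ i) \<longlonglongrightarrow> L i j"
        unfolding e by (rule entry_lim)
      thus ?thesis using entry_lim[of j i] LIMSEQ_unique by blast
    qed
    thus ?thesis unfolding Xs_def transpose_def by (simp add: vec_eq_iff)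
  qed
  have lowXs: "qf Q z \<le> qf Xs z" for z
    using LIMSEQ_le_const[OF qf_lim] lowX by blast
  obtain q where q: "q > 0" "\<And>z. q * (z \<bullet> z) \<le> qf Q z" using qf_lower[OF Qpd] by blast
  have pdXs: "pd Xs"
  proof -
    have "qf Xs z > 0" if "z \<noteq> 0" for z
    proof -
      have "z \<bullet> z > 0" using that by simp
      hence "q * (z \<bullet> z) > 0" using q by simp
      thus ?thesis using q(2)[of z] lowXs[of z] by linarith
    qed
    thus ?thesis using symXs pd_qf by blast
  qed
  have XsX: "qf Xs z \<le> qf (X k) z" for k z
    using decseq_ge[OF dec qf_lim] .
  have GXs_le: "qf (G Xs) z \<le> qf Xs z" for z
  proof -
    have "qf (G Xs) z \<le> qf (X (Suc k)) z" for k
      unfolding XS by (rule H1[OF pdXs XsX pdX])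
    moreover have "(\<lambda>k. qf (X (Suc k)) z) \<longlonglongrightarrow> qf Xs z" using qf_lim LIMSEQ_Suc by blast
    ultimately show ?thesis using LIMSEQ_le_const by blast
  qed
  define d where "d k = (\<Sum>i\<in>UNIV. \<Sum>j\<in>UNIV. \<bar>(X k - Xs)$i$j\<bar>)" for k
  have d0: "d \<longlonglongrightarrow> 0"
  proof -
    have "(\<lambda>k. \<Sum>i\<in>UNIV. \<Sum>j\<in>UNIV. \<bar>X k $ i $ j - L i j\<bar>) \<longlonglongrightarrow> (\<Sum>i\<in>UNIV. \<Sum>j\<in>UNIV. \<bar>L i j - L i j\<bar>)"
      by (intro tendsto_sum tendsto_rabs tendsto_diff entry_lim tendsto_const)
    thus ?thesis unfolding d_def Xs_def by simp
  qed
  have dbound: "qf (X k) z \<le> qf Xs z + d k * (z \<bullet> z)" for k z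
    using qf_abs_bound[of "X k - Xs" z] unfolding d_def qf_diff by linarith
  have GXs_ge: "qf Xs z \<le> qf (G Xs) z" for z
  proof -
    have tb: "t * qf Xs z \<le> qf (G Xs) z" if t: "0 < t" "t < 1" for t
    proof -
      have "q * (1/t - 1) > 0" using q t by simp
      then obtain N where N: "\<And>k. k \<ge> N \<Longrightarrow> norm (d k - 0) < q * (1/t - 1)"
        using d0[unfolded LIMSEQ_def dist_norm] by blast
      have dN: "d N \<le> q * (1/t - 1)" using N[of N] by simp
      let ?Y = "(1/t) *\<^sub>R Xs"
      have pdY: "pd ?Y" using pd_scale[OF pdXs] t by simp
      have le: "qf (X N) w \<le> qf ?Y w" for w
      proof -
        have "d N * (w \<bullet> w) \<le> q * (1/t - 1) * (w \<bullet> w)" using dN by (intro mult_right_mono) auto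
        also have "\<dots> = (1/t - 1) * (q * (w \<bullet> w))" by simp
        also have "\<dots> \<le> (1/t - 1) * qf Xs w"
          using q(2)[of w] lowXs[of w] t by (intro mult_left_mono) auto
        finally have "qf (X N) w \<le> qf Xs w + (1/t - 1) * qf Xs w" using dbound[of N w] by linarith
        thus ?thesis by (simp add: qf_scaleR algebra_simps)
      qed
      have "qf (X (Suc N)) z \<le> qf (G ?Y) z" unfolding XS by (rule H1[OF pdX le pdY])
      hence A: "t * qf (X (Suc N)) z \<le> t * qf (G ?Y) z" using t by (intro mult_left_mono) auto
      have tY: "t *\<^sub>R ?Y = Xs" using t by simp
      have B: "t * qf (G ?Y) z + (1 - t) * qf Q z \<le> qf (G Xs) z"
        using H2[OF pdY t(1)] t unfolding tY by simp
      have C: "0 \<le> (1 - t) * qf Q z" using Qnn t by simp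
      have D: "t * qf Xs z \<le> t * qf (X (Suc N)) z" using XsX t by (intro mult_left_mono) auto
      show ?thesis using A B C D by linarith
    qed
    show ?thesis
    proof (rule ccontr)
      assume "\<not> ?thesis"
      hence lt: "qf (G Xs) z < qf Xs z" by simp
      have b0: "0 \<le> qf (G Xs) z" using H0'[OF pdXs, of z] Qnn order.trans by blast
      define t where "t = (qf Xs z + qf (G Xs) z) / (2 * qf Xs z)"
      have pos: "qf Xs z > 0" using lt b0 by linarith
      have s1: "qf Xs z + qf (G Xs) z < 2 * qf Xs z" using lt by linarith
      have "0 < t" unfolding t_def using pos b0 by (intro divide_pos_pos) auto
      moreover have "t < 1" unfolding t_def using pos s1 by (simp add: divide_less_eq)
      ultimately have "0 < t" "t < 1" by auto
      hence "t * qf Xs z \<le> qf (G Xs) z" by (rule tb)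
      moreover have "t * qf Xs z = (qf Xs z + qf (G Xs) z) / 2" using pos unfolding t_def by simp
      ultimately show False using lt by (simp add: field_simps)
    qed
  qed
  have "qf (G Xs) z = qf Xs z" for z using GXs_le GXs_ge by (rule order.antisym)
  hence "G Xs = Xs"
    using sym_qf_eq[of "G Xs" Xs] pd_sym[OF H0[OF pdXs]] symXs by blast
  moreover have "qf Xs z \<le> qf P z" for z using XsX[where k=0] unfolding X_def by simp
  ultimately show ?thesis using pdXs by blast
qed

end



definition Gf :: "real^'n^'n \<Rightarrow> real^'n^'n \<Rightarrow> real \<Rightarrow> real^'n^'n \<Rightarrow> real^'n^'n \<Rightarrow> real^'n^'n" where
  "Gf A Q lam T X = Q + (1 - lam) *\<^sub>R (A ** X ** transpose A)
     + lam *\<^sub>R (A ** matrix_inv (matrix_inv X + T) ** transpose A)"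

lemma qf_AMAt: "qf (A ** M ** transpose A) z = qf M (transpose A *v z)"
  using qf_congr[of "transpose A" M z] by simp

lemma qf_Gf: "qf (Gf A Q lam T X) z = qf Q z + (1 - lam) * qf X (transpose A *v z)
   + lam * qf (matrix_inv (matrix_inv X + T)) (transpose A *v z)"
  unfolding Gf_def by (simp add: qf_add qf_scaleR qf_AMAt del: transpose_matrix_vector)

lemma sym_AMAt: "transpose (M::real^'n^'n) = M \<Longrightarrow> transpose (A ** M ** transpose A) = A ** M ** transpose A"
proof -
  assume h: "transpose M = M"
  have "transpose (A ** M ** transpose A) = transpose (transpose A) ** transpose M ** transpose A"
    by (simp only: matrix_transpose_mul matrix_mul_assoc)
  thus ?thesis using h by simp
qed

lemma inv_antitone:
  assumes P1: "pd P1" and P2: "pd P2" and le: "\<And>x. qf P1 x \<le> qf P2 x"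
  shows "qf (matrix_inv P2) b \<le> qf (matrix_inv P1) b"
proof -
  have "\<forall>u. 0 \<le> qf (matrix_inv P1) b + 2 * (b \<bullet> u) + qf P1 u"
    using min_lemma[OF P1] by blast
  hence "\<forall>u. 0 \<le> qf (matrix_inv P1) b + 2 * (b \<bullet> u) + qf P2 u"
  proof (intro allI)
    fix u assume h: "\<forall>u. 0 \<le> qf (matrix_inv P1) b + 2 * (b \<bullet> u) + qf P1 u"
    show "0 \<le> qf (matrix_inv P1) b + 2 * (b \<bullet> u) + qf P2 u" using h[rule_format, of u] le[of u] by linarith
  qed
  thus ?thesis using min_lemma[OF P2] by blast
qed

lemma inv_scale:
  assumes "invertible (M::real^'n^'n)" "c \<noteq> 0"
  shows "matrix_inv (c *\<^sub>R M) = (1/c) *\<^sub>R matrix_inv M"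
proof (rule inv_unique)
  have "(c *\<^sub>R M) ** ((1/c) *\<^sub>R matrix_inv M) = (c * (1/c)) *\<^sub>R (M ** matrix_inv M)"
    by (simp add: matrix_scalar_ac scalar_matrix_assoc[symmetric])
  thus "(c *\<^sub>R M) ** ((1/c) *\<^sub>R matrix_inv M) = mat 1"
    using assms inv_props(1)[OF assms(1)] by simp
qed

lemma Gf_rmap:
  fixes A Q T :: "real^'n^'n"
  assumes Q: "pd Q" and T: "psd T" and lam: "0 \<le> lam" "lam \<le> 1"
  shows "rmap (Gf A Q lam T) Q"
proof -
  have F: "pd (matrix_inv (matrix_inv X + T))" if "pd X" for X
    using pd_inv[OF pd_add_psd[OF pd_inv[OF that] T]] .
  have lowG: "qf Q z \<le> qf (Gf A Q lam T X) z" if X: "pd X" for X z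
  proof -
    have "0 \<le> qf X (transpose A *v z)" "0 \<le> qf (matrix_inv (matrix_inv X + T)) (transpose A *v z)"
      using X F[OF X] pd_psd psd_qf by blast+
    thus ?thesis unfolding qf_Gf using lam by simp
  qed
  show ?thesis
  proof
    show "pd Q" by (rule Q)
  next
    fix X :: "real^'n^'n" assume X: "pd X"
    have "transpose (Gf A Q lam T X) = Gf A Q lam T X"
      unfolding Gf_def using pd_sym[OF Q] pd_sym[OF X] pd_sym[OF F[OF X]]
      by (simp add: transpose_add transpose_scalar sym_AMAt)
    moreover have "qf (Gf A Q lam T X) z > 0" if "z \<noteq> 0" for z
    proof -
      have "0 < qf Q z" using Q that pd_qf by blast
      thus ?thesis using lowG[OF X, of z] by linarith
    qed
    ultimately show "pd (Gf A Q lam T X)" using pd_qf by blast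
  next
    fix X :: "real^'n^'n" and z assume X: "pd X"
    show "qf Q z \<le> qf (Gf A Q lam T X) z" using lowG[OF X] .
  next
    fix X1 X2 :: "real^'n^'n" and z
    assume X1: "pd X1" and le: "\<And>z. qf X1 z \<le> qf X2 z" and X2: "pd X2"
    have i1: "qf (matrix_inv X2) x \<le> qf (matrix_inv X1) x" for x by (rule inv_antitone[OF X1 X2 le])
    have "qf (matrix_inv X2 + T) x \<le> qf (matrix_inv X1 + T) x" for x using i1 by (simp add: qf_add)
    hence i2: "qf (matrix_inv (matrix_inv X1 + T)) x \<le> qf (matrix_inv (matrix_inv X2 + T)) x" for x
      by (rule inv_antitone[OF pd_add_psd[OF pd_inv[OF X2] T] pd_add_psd[OF pd_inv[OF X1] T]])
    have "(1 - lam) * qf X1 (transpose A *v z) \<le> (1 - lam) * qf X2 (transpose A *v z)"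
      using le lam by (intro mult_left_mono) auto
    moreover have "lam * qf (matrix_inv (matrix_inv X1 + T)) (transpose A *v z)
        \<le> lam * qf (matrix_inv (matrix_inv X2 + T)) (transpose A *v z)"
      using i2 lam by (intro mult_left_mono) auto
    ultimately show "qf (Gf A Q lam T X1) z \<le> qf (Gf A Q lam T X2) z"
      unfolding qf_Gf by linarith
  next
    fix X :: "real^'n^'n" and t :: real and z
    assume X: "pd X" and t: "0 < t" "t \<le> 1"
    let ?w = "transpose A *v z"
    have invX: "invertible X" using pd_invertible X by blast
    have Xi: "pd (matrix_inv X)" using pd_inv X by blast
    have invt: "matrix_inv (t *\<^sub>R X) = (1/t) *\<^sub>R matrix_inv X" using inv_scale[OF invX] t by simp
    have M1: "pd ((1/t) *\<^sub>R matrix_inv X + T)" using pd_add_psd[OF pd_scale[OF Xi] T] t by simp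
    have M2: "pd ((1/t) *\<^sub>R (matrix_inv X + T))" using pd_scale[OF pd_add_psd[OF Xi T]] t by simp
    have le: "qf ((1/t) *\<^sub>R matrix_inv X + T) x \<le> qf ((1/t) *\<^sub>R (matrix_inv X + T)) x" for x
    proof -
      have o: "1 \<le> 1/t" using t by simp
      have nn: "0 \<le> qf T x" using T psd_qf by blast
      have "qf T x \<le> (1/t) * qf T x" using mult_right_mono[OF o nn] by simp
      thus ?thesis by (simp add: qf_add qf_scaleR algebra_simps)
    qed
    have sc: "matrix_inv ((1/t) *\<^sub>R (matrix_inv X + T)) = t *\<^sub>R matrix_inv (matrix_inv X + T)"
      using inv_scale[OF pd_invertible[OF pd_add_psd[OF Xi T]], of "1/t"] t by simp
    have key: "t * qf (matrix_inv (matrix_inv X + T)) ?w \<le> qf (matrix_inv (matrix_inv (t *\<^sub>R X) + T)) ?w"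
      using inv_antitone[OF M1 M2 le, of ?w] unfolding sc invt by (simp add: qf_scaleR)
    have "t * qf (Gf A Q lam T X) z + (1 - t) * qf Q z
       = qf Q z + (1 - lam) * qf (t *\<^sub>R X) ?w + lam * (t * qf (matrix_inv (matrix_inv X + T)) ?w)"
      unfolding qf_Gf by (simp add: qf_scaleR algebra_simps)
    also have "\<dots> \<le> qf (Gf A Q lam T (t *\<^sub>R X)) z"
      unfolding qf_Gf using key lam by (simp add: mult_left_mono)
    finally show "t * qf (Gf A Q lam T X) z + (1 - t) * qf Q z \<le> qf (Gf A Q lam T (t *\<^sub>R X)) z" .
  qed
qed


lemma transpose_vcat: "transpose (vcat P Q) = hcat (transpose P) (transpose Q)"
  by (simp add: vcat_def hcat_def transpose_def vec_eq_iff split: sum.split)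
lemma transpose_hcat: "transpose (hcat P Q) = vcat (transpose P) (transpose Q)"
  by (simp add: vcat_def hcat_def transpose_def vec_eq_iff split: sum.split)
lemma hcat_vcat: "hcat (vcat a b) (vcat c d) = vcat (hcat a c) (hcat b d)"
  by (simp add: vcat_def hcat_def vec_eq_iff split: sum.split)

lemma psi_sym:
  fixes A S Q :: "real^'n^'n" and C :: "real^'n^'m" and R Y :: "real^'m^'m"
  assumes S: "transpose S = S" and Y: "transpose Y = Y" and R: "pd R" and Q: "pd Q"
  shows "transpose (Psi A C Q R lam S Y) = Psi A C Q R lam S Y"
proof -
  have Ri: "transpose (matrix_inv R) = matrix_inv R" using pd_sym[OF pd_inv[OF R]] .
  have Qi: "transpose (matrix_inv Q) = matrix_inv Q" using pd_sym[OF pd_inv[OF Q]] .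
  have t1: "transpose (S ** A) = transpose A ** S" using S by (simp add: matrix_transpose_mul)
  have t2: "transpose (transpose A ** S) = S ** A" using S by (simp add: matrix_transpose_mul)
  have t3: "transpose (transpose C ** matrix_inv R) = matrix_inv R ** C" using Ri by (simp add: matrix_transpose_mul)
  have t4: "transpose (matrix_inv R ** C) = transpose C ** matrix_inv R" using Ri by (simp add: matrix_transpose_mul)
  have t5: "transpose (S + transpose C ** matrix_inv R ** C) = S + transpose C ** matrix_inv R ** C"
    using S Ri by (simp add: transpose_add matrix_transpose_mul matrix_mul_assoc)
  have t6: "transpose (Y + matrix_inv R) = Y + matrix_inv R" using Y Ri by (simp add: transpose_add)
  show ?thesis
    unfolding Psi_def Let_def
    by (simp add: transpose_vcat transpose_hcat hcat_vcat transpose_scalar t1 t2 t3 t4 t5 t6 S Qi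
        del: transpose_matrix_vector)
qed

lemma blk2_sym: "transpose S = S \<Longrightarrow> transpose M = M \<Longrightarrow> transpose (blk2 S (mat 1) (mat 1) M) = blk2 S (mat 1) (mat 1) M"
  unfolding blk2_def by (simp add: transpose_vcat transpose_hcat hcat_vcat)

lemma blk2_sym_S: "transpose (blk2 S B B2 M) = blk2 S B B2 M \<Longrightarrow> transpose S = S"
proof -
  assume h: "transpose (blk2 S B B2 M) = blk2 S B B2 M"
  have "transpose S $ i $ j = S $ i $ j" for i j
  proof -
    have "transpose (blk2 S B B2 M) $ Inl i $ Inl j = blk2 S B B2 M $ Inl i $ Inl j" using h by simp
    thus ?thesis by (simp add: transpose_def blk2_def vcat_def hcat_def)
  qed
  thus ?thesis by (simp add: vec_eq_iff)
qed

lemma qf_blk2_I: "qf (blk2 S (mat 1) (mat 1) M) (join u v) = qf S u + 2 * (v \<bullet> u) + qf M v"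
  unfolding blk2_qf by (simp add: inner_commute)

lemma g_ol_Gf:
  assumes "pd X" "psd Y" "pd R"
  shows "g_ol A C Q lam R Y X = Gf A Q lam (Tm C R Y) X"
  unfolding Gf_def using g_ol_eq[OF assms] .

lemma X_ol_eq:
  fixes A Q :: "real^'n^'n" and C :: "real^'n^'m" and R Y :: "real^'m^'m"
  assumes Y: "psd Y" and R: "pd R" and Q: "pd Q" and lam: "0 \<le> lam" "lam \<le> 1"
    and Xs: "pd Xs" "Gf A Q lam (Tm C R Y) Xs = Xs"
  shows "X_ol A C Q lam R Y = Xs"
proof -
  interpret rmap "Gf A Q lam (Tm C R Y)" Q using Gf_rmap[OF Q Tm_props(1)[OF R Y] lam] .
  show ?thesis
    unfolding X_ol_def
  proof (rule the_equality)
    show "pd Xs \<and> Xs = g_ol A C Q lam R Y Xs" using Xs g_ol_Gf[OF Xs(1) Y R] by simp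
  next
    fix X assume h: "pd X \<and> X = g_ol A C Q lam R Y X"
    hence "Gf A Q lam (Tm C R Y) X = X" using g_ol_Gf[OF _ Y R] by metis
    thus "X = Xs" using uniqueness[OF _ _ Xs] h by blast
  qed
qed

lemma core:
  fixes A Q M :: "real^'n^'n" and C :: "real^'n^'m" and R :: "real^'m^'m" and lam :: real
  assumes Q: "pd Q" and R: "pd R" and M: "pd M" and lam: "0 < lam" "lam \<le> 1"
    and super: "\<exists>P. pd P \<and> (\<forall>z. qf Q z + qf P (transpose A *v z) \<le> qf P z)"
  shows "\<forall>Y :: real^'m^'m.
           (psd Y \<and> loewner_le (X_ol A C Q lam R Y) M)
           \<longleftrightarrow> (\<exists>S :: real^'n^'n. psd (Psi A C Q R lam S Y)
                   \<and> psd (blk2 S (mat 1) (mat 1) M) \<and> psd Y)"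
proof (intro allI iffI)
  fix Y :: "real^'m^'m"
  assume h: "psd Y \<and> loewner_le (X_ol A C Q lam R Y) M"
  hence Y: "psd Y" by blast
  let ?T = "Tm C R Y"
  interpret rmap "Gf A Q lam ?T" Q using Gf_rmap[OF Q Tm_props(1)[OF R Y]] lam by simp
  obtain P where P: "pd P" "\<And>z. qf Q z + qf P (transpose A *v z) \<le> qf P z" using super by blast
  have GP: "qf (Gf A Q lam ?T P) z \<le> qf P z" for z
  proof -
    have Tnn: "0 \<le> qf ?T w" for w using Tm_props(1)[OF R Y] psd_qf by blast
    have le1: "qf (matrix_inv (matrix_inv P + ?T)) w \<le> qf P w" for w
    proof -
      have "qf (matrix_inv (matrix_inv P + ?T)) w \<le> qf (matrix_inv (matrix_inv P)) w"
        by (rule inv_antitone[OF pd_inv[OF P(1)] pd_add_psd[OF pd_inv[OF P(1)] Tm_props(1)[OF R Y]]])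
          (use Tnn in \<open>simp add: qf_add\<close>)
      thus ?thesis using inv_inv[OF pd_invertible[OF P(1)]] by simp
    qed
    have "lam * qf (matrix_inv (matrix_inv P + ?T)) (transpose A *v z) \<le> lam * qf P (transpose A *v z)"
      using le1 lam by (intro mult_left_mono) auto
    thus ?thesis unfolding qf_Gf using P(2)[of z] by (simp add: algebra_simps)
  qed
  obtain Xs where Xs: "pd Xs" "Gf A Q lam ?T Xs = Xs" using existence[OF P(1) GP] by blast
  have XolXs: "X_ol A C Q lam R Y = Xs" using X_ol_eq[OF Y R Q _ _ Xs] lam by simp
  define S where "S = matrix_inv Xs"
  have Spd: "pd S" unfolding S_def using pd_inv[OF Xs(1)] .
  have SXs: "matrix_inv S = Xs" unfolding S_def using inv_inv[OF pd_invertible[OF Xs(1)]] .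
  have psi: "psd (Psi A C Q R lam S Y)"
  proof -
    have "\<forall>x. 0 \<le> qf (Psi A C Q R lam S Y) x"
    proof (subst psi_iff[OF Spd Y R Q], use lam in simp, use lam in simp, intro allI)
      fix z
      have e: "qf (Gf A Q lam ?T Xs) z = qf Q z + (1 - lam) * qf Xs (transpose A *v z)
         + lam * qf (matrix_inv (S + ?T)) (transpose A *v z)" unfolding qf_Gf S_def ..
      have "qf (Gf A Q lam ?T Xs) z = qf Xs z" using Xs(2) by simp
      thus "qf Q z + (1 - lam) * qf (matrix_inv S) (transpose A *v z)
         + lam * qf (matrix_inv (S + ?T)) (transpose A *v z) \<le> qf (matrix_inv S) z"
        unfolding SXs e by simp
    qed
    moreover have "transpose (Psi A C Q R lam S Y) = Psi A C Q R lam S Y"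
      by (rule psi_sym[OF pd_sym[OF Spd] psd_sym[OF Y] R Q])
    ultimately show ?thesis using psd_qf by blast
  qed
  have XsM: "qf Xs v \<le> qf M v" for v using h XolXs loewner_qf by blast
  have blk: "psd (blk2 S (mat 1) (mat 1) M)"
  proof -
    have "0 \<le> qf (blk2 S (mat 1) (mat 1) M) x" for x
    proof -
      obtain u v where x: "x = join u v" using join_split by metis
      have "\<forall>u. 0 \<le> qf M v + 2 * (v \<bullet> u) + qf S u"
        using min_lemma[OF Spd, of "qf M v" v] XsM[of v] SXs by simp
      thus ?thesis unfolding x qf_blk2_I by (simp add: algebra_simps)
    qed
    thus ?thesis using psd_qf blk2_sym[OF pd_sym[OF Spd] pd_sym[OF M]] by blast
  qed
  show "\<exists>S. psd (Psi A C Q R lam S Y) \<and> psd (blk2 S (mat 1) (mat 1) M) \<and> psd Y"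
    using psi blk Y by blast
next
  fix Y :: "real^'m^'m"
  assume "\<exists>S. psd (Psi A C Q R lam S Y) \<and> psd (blk2 S (mat 1) (mat 1) M) \<and> psd Y"
  then obtain S where psi: "psd (Psi A C Q R lam S Y)" and blk: "psd (blk2 S (mat 1) (mat 1) M)"
    and Y: "psd Y" by blast
  let ?T = "Tm C R Y"
  interpret rmap "Gf A Q lam ?T" Q using Gf_rmap[OF Q Tm_props(1)[OF R Y]] lam by simp
  have symS: "transpose S = S" using blk2_sym_S psd_sym[OF blk] by blast
  have blkq: "0 \<le> qf S u + 2 * (v \<bullet> u) + qf M v" for u v
    using blk psd_qf qf_blk2_I by metis
  have Spd: "pd S"
  proof -
    have "qf S u > 0" if u: "u \<noteq> 0" for u
    proof (rule ccontr)
      assume "\<not> qf S u > 0"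
      hence s: "qf S u \<le> 0" by simp
      have m: "qf M u > 0" using M u pd_qf by blast
      have uu: "u \<bullet> u > 0" using u by simp
      define c where "c = (u \<bullet> u) / qf M u"
      have "0 \<le> qf S u + 2 * ((- c *\<^sub>R u) \<bullet> u) + qf M (- c *\<^sub>R u)" using blkq .
      also have "qf M (- c *\<^sub>R u) = c * c * qf M u" using qf_scale_vec[of M "- c" u] by simp
      also have "c * c * qf M u = c * (u \<bullet> u)" unfolding c_def using m by simp
      also have "2 * ((- c *\<^sub>R u) \<bullet> u) = - 2 * (c * (u \<bullet> u))" by simp
      finally have "0 \<le> qf S u - c * (u \<bullet> u)" by simp
      moreover have "c * (u \<bullet> u) > 0" unfolding c_def using m uu by simp
      ultimately show False using s by linarith
    qed
    thus ?thesis using symS pd_qf by blast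
  qed
  have SM: "qf (matrix_inv S) v \<le> qf M v" for v
  proof -
    have "\<forall>u. 0 \<le> qf M v + 2 * (v \<bullet> u) + qf S u" using blkq by (simp add: algebra_simps)
    thus ?thesis using min_lemma[OF Spd] by blast
  qed
  let ?P = "matrix_inv S"
  have Ppd: "pd ?P" using pd_inv[OF Spd] .
  have PS: "matrix_inv ?P = S" using inv_inv[OF pd_invertible[OF Spd]] .
  have GP: "qf (Gf A Q lam ?T ?P) z \<le> qf ?P z" for z
  proof -
    have "\<forall>x. 0 \<le> qf (Psi A C Q R lam S Y) x" using psi psd_qf by blast
    hence "\<forall>z. qf Q z + (1 - lam) * qf ?P (transpose A *v z)
         + lam * qf (matrix_inv (S + ?T)) (transpose A *v z) \<le> qf ?P z"
      using psi_iff[OF Spd Y R Q] lam by simp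
    thus ?thesis unfolding qf_Gf PS by blast
  qed
  obtain Xs where Xs: "pd Xs" "Gf A Q lam ?T Xs = Xs" "\<forall>z. qf Xs z \<le> qf ?P z"
    using existence[OF Ppd GP] by blast
  have XolXs: "X_ol A C Q lam R Y = Xs" using X_ol_eq[OF Y R Q _ _ Xs(1,2)] lam by simp
  have "loewner_le Xs M"
    unfolding loewner_qf
    using pd_sym[OF Xs(1)] pd_sym[OF M] Xs(3) SM by (auto simp: transpose_diff intro: order.trans)
  thus "psd Y \<and> loewner_le (X_ol A C Q lam R Y) M" using Y XolXs by simp
qed


lemma mpow_comm: "mpow A (Suc k) = A ** mpow A k"
proof (induction k)
  case 0 thus ?case by simp
next
  case (Suc k)
  have "mpow A (Suc (Suc k)) = (mpow A k ** A) ** A" by simp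
  also have "\<dots> = (A ** mpow A k) ** A" using Suc.IH by simp
  also have "\<dots> = A ** (mpow A k ** A)" by (simp add: matrix_mul_assoc)
  finally show ?case by simp
qed

lemma mpow_transp_shift: "transpose (mpow A (Suc k)) *v z = transpose (mpow A k) *v (transpose A *v z)"
  unfolding mpow_comm by (simp only: matrix_transpose_mul matrix_vector_mul_assoc)

lemma qf_sum: "qf (\<Sum>j<(N::nat). f j) z = (\<Sum>j<N. qf (f j) z)"
  by (induction N) (simp_all add: qf_add)

lemma transpose_sum: "transpose (\<Sum>j<(N::nat). f j) = (\<Sum>j<N. transpose (f j :: real^'n^'m))"
  by (induction N) (simp_all add: transpose_add)

lemma super_from_entries:
  fixes A Q :: "real^'n^'n"
  assumes ent: "\<And>i j. (\<lambda>k. mpow A k $ i $ j) \<longlonglongrightarrow> 0" and Q: "pd Q"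
  shows "\<exists>P. pd P \<and> (\<forall>z. qf Q z + qf P (transpose A *v z) \<le> qf P z)"
proof -
  obtain q where q: "q > 0" "\<And>z. q * (z \<bullet> z) \<le> qf Q z" using qf_lower[OF Q] by blast
  obtain mu where mu: "mu > 0" "\<And>z. qf Q z \<le> mu * (z \<bullet> z)" using qf_upper by blast
  define D where "D k = mpow A k ** transpose (mpow A k)" for k
  define s where "s k = (\<Sum>i\<in>UNIV. \<Sum>j\<in>UNIV. \<bar>D k $ i $ j\<bar>)" for k
  have s0: "s \<longlonglongrightarrow> 0"
  proof -
    have De: "D k $ i $ j = (\<Sum>l\<in>UNIV. mpow A k $ i $ l * mpow A k $ j $ l)" for k i j
      unfolding D_def by (simp add: matrix_matrix_mult_def transpose_def)
    have "(\<lambda>k. \<Sum>i\<in>UNIV. \<Sum>j\<in>UNIV. \<bar>\<Sum>l\<in>UNIV. mpow A k $ i $ l * mpow A k $ j $ l\<bar>)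
       \<longlonglongrightarrow> (\<Sum>i\<in>(UNIV::'n set). \<Sum>j\<in>(UNIV::'n set). \<bar>\<Sum>l\<in>(UNIV::'n set). 0 * 0\<bar>)"
      by (intro tendsto_sum tendsto_rabs tendsto_mult ent)
    thus ?thesis unfolding s_def De by simp
  qed
  have "q / (2 * mu) > 0" using q mu by simp
  then obtain N0 where N0: "\<And>k. k \<ge> N0 \<Longrightarrow> norm (s k - 0) < q / (2 * mu)"
    using s0[unfolded LIMSEQ_def dist_norm] by blast
  define N where "N = Suc N0"
  have sN: "mu * s N \<le> q / 2"
  proof -
    have "s N < q / (2 * mu)" using N0[of N] unfolding N_def by simp
    hence "mu * s N < mu * (q / (2 * mu))" by (rule mult_strict_left_mono[OF _ mu(1)])
    moreover have "mu * (q / (2 * mu)) = q / 2" using mu by simp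
    ultimately show ?thesis by linarith
  qed
  define a where "a j z = qf Q (transpose (mpow A j) *v z)" for j z
  have aN: "a N z \<le> qf Q z / 2" for z
  proof -
    have "a N z \<le> mu * ((transpose (mpow A N) *v z) \<bullet> (transpose (mpow A N) *v z))"
      unfolding a_def by (rule mu(2))
    also have "(transpose (mpow A N) *v z) \<bullet> (transpose (mpow A N) *v z) = qf (D N) z"
      unfolding D_def qf_def by (simp add: inner_transpose matrix_vector_mul_assoc[symmetric] del: transpose_matrix_vector)
    also have "qf (D N) z \<le> s N * (z \<bullet> z)" unfolding s_def using qf_abs_bound[of "D N" z] by linarith
    finally have "a N z \<le> mu * (s N * (z \<bullet> z))" using mu by (simp add: mult_left_mono)
    also have "\<dots> = (mu * s N) * (z \<bullet> z)" by simp
    also have "\<dots> \<le> (q / 2) * (z \<bullet> z)" using sN by (intro mult_right_mono) auto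
    also have "\<dots> \<le> qf Q z / 2" using q(2)[of z] by simp
    finally show ?thesis .
  qed
  define P0 where "P0 = (\<Sum>j<N. mpow A j ** Q ** transpose (mpow A j))"
  have qP0: "qf P0 z = (\<Sum>j<N. a j z)" for z
    unfolding P0_def qf_sum a_def by (simp add: qf_AMAt del: transpose_matrix_vector)
  have a0: "a 0 z = qf Q z" for z unfolding a_def by simp
  have ashift: "a (Suc j) z = a j (transpose A *v z)" for j z
    unfolding a_def mpow_transp_shift ..
  have tele: "qf P0 z - qf P0 (transpose A *v z) = qf Q z - a N z" for z
  proof -
    have "(\<Sum>j<Suc N. a j z) = a 0 z + (\<Sum>j<N. a (Suc j) z)" by (rule sum.lessThan_Suc_shift)
    moreover have "(\<Sum>j<Suc N. a j z) = (\<Sum>j<N. a j z) + a N z" by simp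
    ultimately show ?thesis unfolding qP0 ashift[symmetric] a0 by linarith
  qed
  have anonneg: "0 \<le> a j z" for j z unfolding a_def using Q pd_psd psd_qf by blast
  define P where "P = 2 *\<^sub>R P0"
  have "\<forall>z. qf Q z + qf P (transpose A *v z) \<le> qf P z"
  proof
    fix z
    show "qf Q z + qf P (transpose A *v z) \<le> qf P z"
      unfolding P_def qf_scaleR using tele[of z] aN[of z] by linarith
  qed
  moreover have "pd P"
  proof -
    have "transpose P0 = P0"
      unfolding P0_def transpose_sum using pd_sym[OF Q]
      by (intro sum.cong) (simp_all add: sym_AMAt)
    hence symP: "transpose P = P" unfolding P_def by (simp add: transpose_scalar)
    have "qf P z > 0" if "z \<noteq> 0" for z
    proof -
      have "qf P0 z = a 0 z + (\<Sum>j\<in>{1..<N}. a j z)"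
        unfolding qP0 N_def using sum.atLeast_Suc_lessThan[of 0 "Suc N0" "\<lambda>j. a j z"]
        by (simp add: lessThan_atLeast0)
      moreover have "(\<Sum>j\<in>{1..<N}. a j z) \<ge> 0" using anonneg by (simp add: sum_nonneg)
      moreover have "a 0 z > 0" unfolding a0 using Q that pd_qf by blast
      ultimately show ?thesis unfolding P_def qf_scaleR by linarith
    qed
    thus ?thesis using symP pd_qf by blast
  qed
  ultimately show ?thesis by blast
qed


theorem theorem2:
  fixes A Q M \<Sigma> :: "real^'n^'n" and C :: "real^'n^'m" and R :: "real^'m^'m" and lam :: real
  assumes "spectral_radius A < 1"
    and "pd Q" and "pd R" and "pd M"
    and "0 < lam" and "lam \<le> 1"
    and "\<Sigma> = A ** \<Sigma> ** transpose A + Q"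
  shows "\<forall>Y :: real^'m^'m.
           (psd Y \<and> loewner_le (X_ol A C Q lam R Y) M)
           \<longleftrightarrow> (\<exists>S :: real^'n^'n. psd (Psi A C Q R lam S Y)
                   \<and> psd (blk2 S (mat 1) (mat 1) M) \<and> psd Y)"
proof -
  have "\<exists>P. pd P \<and> (\<forall>z. qf Q z + qf P (transpose A *v z) \<le> qf P z)"
    using super_from_entries[OF stable_entries[OF assms(1)] assms(2)] .
  thus ?thesis using core[OF assms(2,3,4,5,6)] by blast
qed

end
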